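(* Let $d=2$ and $f\in\mathcal{S}(\mathbb{R}^2)$ with $\mathcal{F}[f](x_0)\neq0$ for some $x_0\in\mathbb{R}^2$. Let $(\xi_x)_{x\in\mathbb{Z}^2}$ be i.i.d. a.s. finite $\mathbb{R}^2$-valued random variables, and $T_r^0=\sum_{x\in\mathbb{Z}^2} f((x+\xi_x)/r)$. Then $r\mapsto\operatorname{Var}[T_r^0]$ is bounded if and only if $\mathbb{E}[|\xi_0|^2]<\infty$.
   Context: $\mathcal{F}[f](k)=\int f(x)e^{2\pi\mathbf{i}k\cdot x}dx$; $\mathcal{S}(\mathbb{R}^2)$ is the Schwartz space. *)

theory Defs
  imports "HOL-Probability.Probability"
begin

fun iter_pderiv :: "2 list \<Rightarrow> (real^2 \<Rightarrow> real) \<Rightarrow> real^2 \<Rightarrow> real" where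
  "iter_pderiv [] f = f"
| "iter_pderiv (i # is) f = (\<lambda>x. frechet_derivative (iter_pderiv is f) (at x) (axis i 1))"

definition schwartz2 :: "(real^2 \<Rightarrow> real) \<Rightarrow> bool" where
  "schwartz2 f \<longleftrightarrow>
     (\<forall>is x. iter_pderiv is f differentiable (at x)) \<and>
     (\<forall>is (N::nat). bounded (range (\<lambda>x. (1 + norm x) ^ N * iter_pderiv is f x)))"

definition fourier2 :: "(real^2 \<Rightarrow> real) \<Rightarrow> real^2 \<Rightarrow> complex" where
  "fourier2 f k = (LINT x|lborel. complex_of_real (f x) * cis (2 * pi * (k \<bullet> x)))"

definition lat :: "int \<times> int \<Rightarrow> real^2" where
  "lat p = vector [of_int (fst p), of_int (snd p)]"

definition linstat :: "(real^2 \<Rightarrow> real) \<Rightarrow> (int \<times> int \<Rightarrow> 'a \<Rightarrow> real^2) \<Rightarrow> real \<Rightarrow> 'a \<Rightarrow> real" where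
  "linstat f \<xi> r \<omega> = (\<Sum>\<^sub>\<infinity>p\<in>UNIV. f ((1 / r) *\<^sub>R (lat p + \<xi> p \<omega>)))"

text \<open>Variance with values in [0, infinity] (for an integrable X), so that an
  infinite variance is not silently turned into 0.\<close>
definition evariance :: "'a measure \<Rightarrow> ('a \<Rightarrow> real) \<Rightarrow> ennreal" where
  "evariance M X = (\<integral>\<^sup>+ \<omega>. ennreal ((X \<omega> - integral\<^sup>L M X)\<^sup>2) \<partial>M)"

end

theory Submission
  imports Defs
begin

lemma norm_le_abs12: "norm (x::real^2) \<le> \<bar>x$1\<bar> + \<bar>x$2\<bar>"
  using norm_le_l1_cart[of x] by (simp add: UNIV_2)

lemma vec2_decomp: "(h::real^2) = h$1 *\<^sub>R axis 1 1 + h$2 *\<^sub>R axis 2 1"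
  by (auto simp: vec_eq_iff axis_def forall_2)

definition PD :: "(real^2 \<Rightarrow> real) \<Rightarrow> 2 \<Rightarrow> real^2 \<Rightarrow> real" where
  "PD f i x = frechet_derivative f (at x) (axis i 1)"

lemma iter_pderiv_single: "iter_pderiv [i] f = PD f i"
  by (simp add: PD_def fun_eq_iff)

context fixes f :: "real^2 \<Rightarrow> real" assumes S: "schwartz2 f"
begin

lemma sw_diff: "f differentiable (at x)"
  using S unfolding schwartz2_def by (metis iter_pderiv.simps(1))

lemma sw_deriv: "(f has_derivative (\<lambda>h. h$1 * PD f 1 x + h$2 * PD f 2 x)) (at x)"
proof -
  have d: "(f has_derivative frechet_derivative f (at x)) (at x)"
    using sw_diff frechet_derivative_works by blast
  have bl: "bounded_linear (frechet_derivative f (at x))"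
    using d has_derivative_bounded_linear by blast
  have "frechet_derivative f (at x) h = h$1 * PD f 1 x + h$2 * PD f 2 x" for h
  proof -
    have "frechet_derivative f (at x) h = frechet_derivative f (at x) (h$1 *\<^sub>R axis 1 1 + h$2 *\<^sub>R axis 2 1)"
      by (subst vec2_decomp[of h]) simp
    also have "\<dots> = h$1 * PD f 1 x + h$2 * PD f 2 x"
    proof -
      interpret bounded_linear "frechet_derivative f (at x)" by (rule bl)
      show ?thesis by (simp add: add scaleR PD_def)
    qed
    finally show ?thesis .
  qed
  then have "frechet_derivative f (at x) = (\<lambda>h. h$1 * PD f 1 x + h$2 * PD f 2 x)" by auto
  with d show ?thesis by simp
qed

lemma sw_cont: "continuous (at x) f"
  using sw_diff differentiable_imp_continuous_within by blast

lemma sw_contPD: "continuous (at x) (PD f i)"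
proof -
  have "PD f i differentiable (at x)"
    using S unfolding schwartz2_def by (metis iter_pderiv_single)
  then show ?thesis by (simp add: differentiable_imp_continuous_within)
qed

lemma sw_decay: "\<exists>C. \<forall>x. \<bar>f x\<bar> * (1 + norm x) ^ 4 \<le> C"
proof -
  have "bounded (range (\<lambda>x. (1 + norm x) ^ 4 * iter_pderiv [] f x))"
    using S unfolding schwartz2_def by blast
  then obtain B where "\<forall>x. norm ((1 + norm x) ^ 4 * f x) \<le> B"
    by (auto simp: bounded_iff)
  then show ?thesis
    by (intro exI[of _ B]) (auto simp: abs_mult mult.commute)
qed

lemma sw_decayPD: "\<exists>C. \<forall>i x. \<bar>PD f i x\<bar> * (1 + norm x) ^ 4 \<le> C"
proof -
  have "bounded (range (\<lambda>x. (1 + norm x) ^ 4 * PD f i x))" for i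
    using S unfolding schwartz2_def by (metis iter_pderiv_single)
  then have "\<exists>B. \<forall>x. norm ((1 + norm x) ^ 4 * PD f i x) \<le> B" for i
    by (auto simp: bounded_iff)
  then obtain B where B: "\<forall>x. norm ((1 + norm x) ^ 4 * PD f i x) \<le> B i" for i
    by metis
  have B': "\<bar>PD f i x\<bar> * (1 + norm x) ^ 4 \<le> B i" "0 \<le> B i" for i x
    using B[of i] norm_ge_zero[of "(1 + norm x) ^ 4 * PD f i x"] by (auto simp: abs_mult mult.commute intro: order_trans[OF _ spec[OF B[of i], of x]])
  show ?thesis
    apply (intro exI[of _ "B 1 + B 2"])
    apply (auto simp: forall_2)
    using B'[of 1] B'[of 2] by (smt (verit))+
qed

end

lemma fourier_nz: "fourier2 f x0 \<noteq> 0 \<Longrightarrow> \<exists>a. f a \<noteq> 0"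
proof (rule ccontr)
  assume "fourier2 f x0 \<noteq> 0" "\<not> (\<exists>a. f a \<noteq> 0)"
  then have "f = (\<lambda>_. 0)" by auto
  then have "fourier2 f x0 = 0" by (simp add: fourier2_def)
  with \<open>fourier2 f x0 \<noteq> 0\<close> show False by simp
qed

context fixes f :: "real^2 \<Rightarrow> real" and a0 assumes S: "schwartz2 f" and nz: "f a0 \<noteq> 0"
begin

lemma Z1: fixes s :: "real^2" assumes "s \<noteq> 0" shows "\<exists>b. f (b + s) \<noteq> f b"
proof (rule ccontr)
  assume "\<not> ?thesis"
  then have per: "f (b + s) = f b" for b by auto
  have it: "f (a0 + real n *\<^sub>R s) = f a0" for n :: nat
  proof (induction n)
    case (Suc n)
    have "a0 + real (Suc n) *\<^sub>R s = (a0 + real n *\<^sub>R s) + s" by (simp add: algebra_simps)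
    then show ?case using per[of "a0 + real n *\<^sub>R s"] Suc by (simp add: add.assoc)
  qed simp
  obtain C where C: "\<And>x. \<bar>f x\<bar> * (1 + norm x) ^ 4 \<le> C" using sw_decay[OF S] by blast
  have fpos: "\<bar>f a0\<bar> > 0" using nz by simp
  have sp: "norm s > 0" using assms by simp
  obtain n :: nat where n: "real n \<ge> (norm a0 + C / \<bar>f a0\<bar>) / norm s" using real_arch_simple by blast
  then have "real n * norm s \<ge> norm a0 + C / \<bar>f a0\<bar>" using sp by (simp add: field_simps)
  moreover have "norm (a0 + real n *\<^sub>R s) \<ge> real n * norm s - norm a0"
    using norm_triangle_ineq2[of "real n *\<^sub>R s" "-a0"] by (simp add: algebra_simps)
  ultimately have N: "norm (a0 + real n *\<^sub>R s) \<ge> C / \<bar>f a0\<bar>" by linarith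
  let ?N = "norm (a0 + real n *\<^sub>R s)"
  have "(1 + ?N) \<le> (1 + ?N) ^ 4" by (rule self_le_power) auto
  then have "\<bar>f a0\<bar> * (1 + ?N) \<le> \<bar>f a0\<bar> * (1 + ?N) ^ 4" using fpos by simp
  also have "\<dots> \<le> C" using C[of "a0 + real n *\<^sub>R s"] it[of n] by simp
  finally have "\<bar>f a0\<bar> * (1 + ?N) \<le> C" .
  moreover have "\<bar>f a0\<bar> * ?N \<ge> C" using N fpos by (simp add: field_simps)
  ultimately show False using fpos by (simp add: algebra_simps)
qed

lemma Z2: fixes w :: "real^2" assumes "w \<noteq> 0" shows "\<exists>b. w$1 * PD f 1 b + w$2 * PD f 2 b \<noteq> 0"
proof (rule ccontr)
  assume "\<not> ?thesis"
  then have z: "w$1 * PD f 1 b + w$2 * PD f 2 b = 0" for b by auto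
  have "f (b + w) = f b" for b :: "real^2"
  proof -
    have d: "((\<lambda>t. f (b + t *\<^sub>R w)) has_derivative (\<lambda>h. 0)) (at t within UNIV)" for t :: real
    proof -
      have "((\<lambda>t. b + t *\<^sub>R w) has_derivative (\<lambda>h. h *\<^sub>R w)) (at t)"
        by (auto intro!: derivative_eq_intros)
      from has_derivative_compose[OF this sw_deriv[OF S]]
      have "((\<lambda>t. f (b + t *\<^sub>R w)) has_derivative
          (\<lambda>h. (h *\<^sub>R w)$1 * PD f 1 (b + t *\<^sub>R w) + (h *\<^sub>R w)$2 * PD f 2 (b + t *\<^sub>R w))) (at t)" .
      moreover have "(\<lambda>h. (h *\<^sub>R w)$1 * PD f 1 (b + t *\<^sub>R w) + (h *\<^sub>R w)$2 * PD f 2 (b + t *\<^sub>R w)) = (\<lambda>h. 0)"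
      proof
        fix h
        have "(h *\<^sub>R w)$1 * PD f 1 (b + t *\<^sub>R w) + (h *\<^sub>R w)$2 * PD f 2 (b + t *\<^sub>R w)
           = h * (w$1 * PD f 1 (b + t *\<^sub>R w) + w$2 * PD f 2 (b + t *\<^sub>R w))"
          by (simp add: algebra_simps)
        then show "(h *\<^sub>R w)$1 * PD f 1 (b + t *\<^sub>R w) + (h *\<^sub>R w)$2 * PD f 2 (b + t *\<^sub>R w) = 0"
          using z by simp
      qed
      ultimately show ?thesis by simp
    qed
    obtain c where "\<forall>t\<in>UNIV. f (b + t *\<^sub>R w) = c"
      using has_derivative_zero_constant[of UNIV "\<lambda>t. f (b + t *\<^sub>R w)"] d by auto
    then have "f (b + 1 *\<^sub>R w) = c" "f (b + 0 *\<^sub>R w) = c" by blast+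
    then have "f (b + 1 *\<^sub>R w) = f (b + 0 *\<^sub>R w)" by simp
    then show ?thesis by simp
  qed
  with Z1[OF assms] show False by blast
qed

lemma two_grad: "\<exists>b1 b2. PD f 1 b1 * PD f 2 b2 - PD f 2 b1 * PD f 1 b2 \<noteq> 0"
proof -
  have "(axis 1 1 :: real^2) \<noteq> 0" by (simp add: axis_eq_0_iff)
  from Z2[OF this] obtain b1 where b1: "PD f 1 b1 \<noteq> 0"
    by (auto simp: axis_def)
  let ?w = "vector [- PD f 2 b1, PD f 1 b1] :: real^2"
  have "?w \<noteq> 0" using b1 by (auto simp: vec_eq_iff forall_2)
  from Z2[OF this] obtain b2 where "?w$1 * PD f 1 b2 + ?w$2 * PD f 2 b2 \<noteq> 0" by blast
  then have "PD f 1 b1 * PD f 2 b2 - PD f 2 b1 * PD f 1 b2 \<noteq> 0"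
    by (simp add: algebra_simps)
  then show ?thesis by blast
qed

end

lemma dir_lemma:
  fixes u1 u2 v1 v2 s1 s2 :: real
  assumes "u1 * v2 - u2 * v1 \<noteq> 0"
  defines "M \<equiv> \<bar>u1\<bar> + \<bar>u2\<bar> + \<bar>v1\<bar> + \<bar>v2\<bar>"
  shows "M > 0" "\<bar>s1 * u1 + s2 * u2\<bar> \<ge> \<bar>u1 * v2 - u2 * v1\<bar> / M * (\<bar>s1\<bar> + \<bar>s2\<bar>) / 2
     \<or> \<bar>s1 * v1 + s2 * v2\<bar> \<ge> \<bar>u1 * v2 - u2 * v1\<bar> / M * (\<bar>s1\<bar> + \<bar>s2\<bar>) / 2"
proof -
  show Mp: "M > 0" using assms(1) unfolding M_def
    by (cases "u1 = 0"; cases "u2 = 0") auto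
  define A where "A = s1 * u1 + s2 * u2"
  define B where "B = s1 * v1 + s2 * v2"
  define d where "d = u1 * v2 - u2 * v1"
  have e1: "d * s1 = A * v2 - B * u2" by (simp add: A_def B_def d_def algebra_simps)
  have e2: "d * s2 = B * u1 - A * v1" by (simp add: A_def B_def d_def algebra_simps)
  have "\<bar>d\<bar> * (\<bar>s1\<bar> + \<bar>s2\<bar>) = \<bar>A * v2 - B * u2\<bar> + \<bar>B * u1 - A * v1\<bar>"
    by (simp add: distrib_left abs_mult[symmetric] e1 e2)
  also have "\<dots> \<le> \<bar>A\<bar> * \<bar>v2\<bar> + \<bar>B\<bar> * \<bar>u2\<bar> + \<bar>B\<bar> * \<bar>u1\<bar> + \<bar>A\<bar> * \<bar>v1\<bar>"
    using abs_triangle_ineq4[of "A * v2" "B * u2"] abs_triangle_ineq4[of "B * u1" "A * v1"] by (simp add: abs_mult)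
  also have "\<dots> \<le> max \<bar>A\<bar> \<bar>B\<bar> * M"
  proof -
    have "\<bar>A\<bar> * \<bar>v2\<bar> \<le> max \<bar>A\<bar> \<bar>B\<bar> * \<bar>v2\<bar>" "\<bar>A\<bar> * \<bar>v1\<bar> \<le> max \<bar>A\<bar> \<bar>B\<bar> * \<bar>v1\<bar>"
         "\<bar>B\<bar> * \<bar>u2\<bar> \<le> max \<bar>A\<bar> \<bar>B\<bar> * \<bar>u2\<bar>" "\<bar>B\<bar> * \<bar>u1\<bar> \<le> max \<bar>A\<bar> \<bar>B\<bar> * \<bar>u1\<bar>"
      by (auto intro: mult_right_mono)
    then show ?thesis unfolding M_def by (simp add: algebra_simps)
  qed
  finally have "\<bar>d\<bar> * (\<bar>s1\<bar> + \<bar>s2\<bar>) / M \<le> max \<bar>A\<bar> \<bar>B\<bar>"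
    using Mp by (simp add: field_simps)
  moreover have "\<bar>d\<bar> / M * (\<bar>s1\<bar> + \<bar>s2\<bar>) / 2 \<le> \<bar>d\<bar> * (\<bar>s1\<bar> + \<bar>s2\<bar>) / M"
    using Mp by (simp add: field_simps)
  ultimately show "\<bar>s1 * u1 + s2 * u2\<bar> \<ge> \<bar>u1 * v2 - u2 * v1\<bar> / M * (\<bar>s1\<bar> + \<bar>s2\<bar>) / 2
     \<or> \<bar>s1 * v1 + s2 * v2\<bar> \<ge> \<bar>u1 * v2 - u2 * v1\<bar> / M * (\<bar>s1\<bar> + \<bar>s2\<bar>) / 2"
    unfolding A_def[symmetric] B_def[symmetric] d_def[symmetric] by linarith
qed

lemma onorm_lin2: "onorm (\<lambda>h::real^2. h$1 * a + h$2 * b) \<le> \<bar>a\<bar> + \<bar>b\<bar>"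
proof (rule onorm_le)
  fix h :: "real^2"
  have "norm (h$1 * a + h$2 * b) \<le> \<bar>h$1\<bar> * \<bar>a\<bar> + \<bar>h$2\<bar> * \<bar>b\<bar>"
    by (simp add: abs_mult[symmetric])
  also have "\<dots> \<le> norm h * \<bar>a\<bar> + norm h * \<bar>b\<bar>"
    by (intro add_mono mult_right_mono component_le_norm_cart) auto
  finally show "norm (h$1 * a + h$2 * b) \<le> (\<bar>a\<bar> + \<bar>b\<bar>) * norm h" by (simp add: algebra_simps)
qed

context fixes f :: "real^2 \<Rightarrow> real" and a0 assumes S: "schwartz2 f" and nz: "f a0 \<noteq> 0"
begin

lemma regime_small:
  "\<exists>c0>0. \<exists>\<rho>>0. \<forall>s. norm s < \<rho> \<longrightarrow> (\<exists>a. \<forall>b\<in>ball a \<rho>. \<bar>f (b + s) - f b\<bar> \<ge> c0 * norm s)"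
proof -
  obtain b1 b2 where det: "PD f 1 b1 * PD f 2 b2 - PD f 2 b1 * PD f 1 b2 \<noteq> 0"
    using two_grad[OF S nz] by blast
  define M where "M = \<bar>PD f 1 b1\<bar> + \<bar>PD f 2 b1\<bar> + \<bar>PD f 1 b2\<bar> + \<bar>PD f 2 b2\<bar>"
  define c0 where "c0 = \<bar>PD f 1 b1 * PD f 2 b2 - PD f 2 b1 * PD f 1 b2\<bar> / M / 2"
  have Mp: "M > 0" using dir_lemma(1)[OF det] unfolding M_def .
  have c0p: "c0 > 0" using Mp det unfolding c0_def by simp
  have dir: "\<exists>bi\<in>{b1,b2}. \<bar>s$1 * PD f 1 bi + s$2 * PD f 2 bi\<bar> \<ge> c0 * norm s" for s :: "real^2"
  proof -
    have n: "norm s \<le> \<bar>s$1\<bar> + \<bar>s$2\<bar>" by (rule norm_le_abs12)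
    have "c0 * norm s \<le> c0 * (\<bar>s$1\<bar> + \<bar>s$2\<bar>)" using n c0p by simp
    moreover have "c0 * (\<bar>s$1\<bar> + \<bar>s$2\<bar>) = \<bar>PD f 1 b1 * PD f 2 b2 - PD f 2 b1 * PD f 1 b2\<bar> / M * (\<bar>s$1\<bar> + \<bar>s$2\<bar>) / 2"
      unfolding c0_def by simp
    ultimately show ?thesis using dir_lemma(2)[OF det, of "s$1" "s$2"] unfolding M_def[symmetric]
      by force
  qed
  have cont: "\<exists>\<epsilon>>0. \<forall>w. dist w bi < \<epsilon> \<longrightarrow> \<bar>PD f j w - PD f j bi\<bar> \<le> c0 / 4" for bi j
  proof -
    have "isCont (PD f j) bi" using sw_contPD[OF S] by blast
    then obtain \<epsilon> where "\<epsilon> > 0" "\<forall>w. dist w bi < \<epsilon> \<longrightarrow> dist (PD f j w) (PD f j bi) < c0 / 4"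
      using c0p unfolding continuous_at_eps_delta by (metis divide_pos_pos zero_less_numeral)
    then show ?thesis by (auto simp: dist_real_def intro!: exI[of _ \<epsilon>] less_imp_le)
  qed
  obtain E where E: "\<And>bi j. E bi j > 0" "\<And>bi j w. dist w bi < E bi j \<Longrightarrow> \<bar>PD f j w - PD f j bi\<bar> \<le> c0 / 4"
    using cont by metis
  define \<rho> where "\<rho> = Min {E b1 1, E b1 2, E b2 1, E b2 2} / 2"
  have \<rho>p: "\<rho> > 0" unfolding \<rho>_def using E(1) by simp
  have \<rho>E: "2 * \<rho> \<le> E bi j" if "bi \<in> {b1, b2}" for bi j
    using that exhaust_2[of j] unfolding \<rho>_def by auto
  have main: "\<bar>f (b + s) - f b\<bar> \<ge> (c0 / 2) * norm s"
    if bi: "bi \<in> {b1, b2}" and dbi: "\<bar>s$1 * PD f 1 bi + s$2 * PD f 2 bi\<bar> \<ge> c0 * norm s"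
      and b: "b \<in> ball bi \<rho>" and s: "norm s < \<rho>" for bi b s
  proof -
    let ?f' = "\<lambda>x (h::real^2). h$1 * PD f 1 x + h$2 * PD f 2 x"
    have lin: "norm (f (b + s) - f b - ?f' bi ((b + s) - b)) \<le> norm ((b + s) - b) * (c0 / 2)"
    proof (rule differentiable_bound_linearization[where S = "ball bi (2 * \<rho>)"])
      show "b + t *\<^sub>R (b + s - b) \<in> ball bi (2 * \<rho>)" if "t \<in> {0..1}" for t
      proof -
        have "dist bi (b + t *\<^sub>R s) \<le> dist bi b + norm (t *\<^sub>R s)"
          by (metis dist_norm dist_triangle2 add_diff_cancel_left' norm_minus_commute)
        also have "norm (t *\<^sub>R s) \<le> norm s" using that by (auto intro: mult_left_le_one_le)
        finally show ?thesis using b s by (auto simp: dist_commute)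
      qed
      show "(f has_derivative ?f' x) (at x within ball bi (2 * \<rho>))" for x
        using sw_deriv[OF S] by (rule has_derivative_at_withinI)
      show "bi \<in> ball bi (2 * \<rho>)" using \<rho>p by simp
      show "onorm (?f' x - ?f' bi) \<le> c0 / 2" if "x \<in> ball bi (2 * \<rho>)" for x
      proof -
        have eq: "(?f' x - ?f' bi) = (\<lambda>h. h$1 * (PD f 1 x - PD f 1 bi) + h$2 * (PD f 2 x - PD f 2 bi))"
          by (auto simp: fun_eq_iff algebra_simps)
        have "onorm (?f' x - ?f' bi) \<le> \<bar>PD f 1 x - PD f 1 bi\<bar> + \<bar>PD f 2 x - PD f 2 bi\<bar>"
          unfolding eq by (rule onorm_lin2)
        moreover have "dist x bi < E bi j" for j using that \<rho>E[OF bi, of j] by (auto simp: dist_commute)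
        ultimately show ?thesis using E(2)[of x bi 1] E(2)[of x bi 2] by simp
      qed
    qed
    then have "norm (f (b + s) - f b - ?f' bi s) \<le> norm s * (c0 / 2)" by simp
    then have "\<bar>f (b + s) - f b - (s$1 * PD f 1 bi + s$2 * PD f 2 bi)\<bar> \<le> norm s * (c0 / 2)" by simp
    moreover have "\<bar>s$1 * PD f 1 bi + s$2 * PD f 2 bi\<bar> \<le> \<bar>f (b + s) - f b\<bar> + \<bar>f (b + s) - f b - (s$1 * PD f 1 bi + s$2 * PD f 2 bi)\<bar>"
      by linarith
    moreover have "c0 / 2 * norm s = c0 * norm s - norm s * (c0 / 2)" by (simp add: field_simps)
    ultimately show ?thesis using dbi by linarith
  qed
  have "\<forall>s. norm s < \<rho> \<longrightarrow> (\<exists>a. \<forall>b\<in>ball a \<rho>. \<bar>f (b + s) - f b\<bar> \<ge> c0 / 2 * norm s)"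
  proof (intro allI impI)
    fix s :: "real^2" assume s: "norm s < \<rho>"
    obtain bi where "bi \<in> {b1, b2}" "\<bar>s$1 * PD f 1 bi + s$2 * PD f 2 bi\<bar> \<ge> c0 * norm s"
      using dir by blast
    then show "\<exists>a. \<forall>b\<in>ball a \<rho>. \<bar>f (b + s) - f b\<bar> \<ge> c0 / 2 * norm s"
      using main s by blast
  qed
  moreover have "c0 / 2 > 0" using c0p by simp
  ultimately show ?thesis using \<rho>p by blast
qed

end

lemma tri4: "\<bar>x - y\<bar> \<le> \<bar>u - x\<bar> + \<bar>u - v\<bar> + \<bar>v - y\<bar>" for x y u v :: real
  by arith

context fixes f :: "real^2 \<Rightarrow> real" and a0 assumes S: "schwartz2 f" and nz: "f a0 \<noteq> 0"
begin

lemma regime_large: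
  "\<exists>\<kappa>>0. \<exists>\<rho>>0. \<exists>L. \<forall>s. norm s \<ge> L \<longrightarrow> (\<forall>b\<in>ball a0 \<rho>. \<bar>f (b + s) - f b\<bar> \<ge> \<kappa>)"
proof -
  have fpos: "\<bar>f a0\<bar> > 0" using nz by simp
  obtain C where C: "\<And>x. \<bar>f x\<bar> * (1 + norm x) ^ 4 \<le> C" using sw_decay[OF S] by blast
  have C0: "C \<ge> 0" using C[of 0] by (smt (verit) zero_le_mult_iff abs_ge_zero zero_le_power norm_ge_zero)
  obtain \<rho> where \<rho>: "\<rho> > 0" "\<And>b. dist b a0 < \<rho> \<Longrightarrow> dist (f b) (f a0) < \<bar>f a0\<bar> / 2"
    using sw_cont[OF S, of a0] fpos unfolding continuous_at_eps_delta
    by (metis half_gt_zero)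
  define R where "R = 4 * C / \<bar>f a0\<bar>"
  have small: "\<bar>f w\<bar> \<le> \<bar>f a0\<bar> / 4" if "norm w \<ge> R" for w
  proof (rule ccontr)
    assume "\<not> ?thesis"
    then have h: "\<bar>f w\<bar> > \<bar>f a0\<bar> / 4" by simp
    have "(1 + norm w) \<le> (1 + norm w) ^ 4" by (rule self_le_power) auto
    then have "\<bar>f w\<bar> * (1 + norm w) \<le> C" using C[of w] by (meson abs_ge_zero mult_left_mono order_trans)
    moreover have "\<bar>f a0\<bar> / 4 * (1 + norm w) < \<bar>f w\<bar> * (1 + norm w)"
      using h by (intro mult_strict_right_mono) (auto simp: add_pos_nonneg)
    moreover have "C \<le> \<bar>f a0\<bar> / 4 * (1 + norm w)"
    proof -
      have "C = \<bar>f a0\<bar> / 4 * R" unfolding R_def using fpos by simp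
      also have "\<dots> \<le> \<bar>f a0\<bar> / 4 * (1 + norm w)" using that fpos by (intro mult_left_mono) auto
      finally show ?thesis .
    qed
    ultimately show False by linarith
  qed
  define L where "L = R + norm a0 + \<rho>"
  have "\<bar>f (b + s) - f b\<bar> \<ge> \<bar>f a0\<bar> / 4" if s: "norm s \<ge> L" and b: "b \<in> ball a0 \<rho>" for s b
  proof -
    have "dist b a0 < \<rho>" using b by (simp add: dist_commute)
    then have fb: "\<bar>f b\<bar> > \<bar>f a0\<bar> / 2" using \<rho>(2)[of b] by (simp add: dist_real_def) (smt (verit))
    have "norm b \<le> norm a0 + dist b a0" by (metis dist_0_norm dist_triangle dist_commute)
    then have "norm b < norm a0 + \<rho>" using \<open>dist b a0 < \<rho>\<close> by linarith
    moreover have "norm (b + s) \<ge> norm s - norm b"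
      using norm_triangle_ineq2[of s "-b"] by (simp add: algebra_simps)
    ultimately have "norm (b + s) \<ge> R" using s unfolding L_def by linarith
    then have "\<bar>f (b + s)\<bar> \<le> \<bar>f a0\<bar> / 4" by (rule small)
    with fb show ?thesis by linarith
  qed
  then have "\<forall>s. norm s \<ge> L \<longrightarrow> (\<forall>b\<in>ball a0 \<rho>. \<bar>f (b + s) - f b\<bar> \<ge> \<bar>f a0\<bar> / 4)" by blast
  moreover have "\<bar>f a0\<bar> / 4 > 0" using fpos by simp
  ultimately show ?thesis using \<rho>(1) by blast
qed

lemma regime_mid:
  assumes \<rho>: "\<rho> > 0"
  shows "\<exists>\<kappa>>0. \<exists>\<tau>>0. \<forall>s. \<rho> \<le> norm s \<and> norm s \<le> L \<longrightarrow> (\<exists>a. \<forall>b\<in>ball a \<tau>. \<bar>f (b + s) - f b\<bar> \<ge> \<kappa>)"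
proof -
  define K where "K = cball (0::real^2) L - ball 0 \<rho>"
  have K: "compact K" unfolding K_def by (intro compact_diff compact_cball open_ball)
  have loc: "\<exists>b0 \<kappa> \<tau>. \<kappa> > 0 \<and> \<tau> > 0 \<and> (\<forall>s\<in>ball s0 \<tau>. \<forall>b\<in>ball b0 \<tau>. \<bar>f (b + s) - f b\<bar> \<ge> \<kappa>)"
    if s0: "s0 \<in> K" for s0
  proof -
    have "s0 \<noteq> 0" using s0 \<rho> unfolding K_def by auto
    then obtain b0 where b0: "f (b0 + s0) \<noteq> f b0" using Z1[OF S nz] by blast
    define \<Delta> where "\<Delta> = \<bar>f (b0 + s0) - f b0\<bar>"
    have \<Delta>: "\<Delta> > 0" using b0 unfolding \<Delta>_def by simp
    obtain t1 where t1: "t1 > 0" "\<And>w. dist w (b0 + s0) < t1 \<Longrightarrow> dist (f w) (f (b0 + s0)) < \<Delta> / 4"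
      using sw_cont[OF S, of "b0 + s0"] \<Delta> unfolding continuous_at_eps_delta
      by (metis divide_pos_pos zero_less_numeral)
    obtain t2 where t2: "t2 > 0" "\<And>w. dist w b0 < t2 \<Longrightarrow> dist (f w) (f b0) < \<Delta> / 4"
      using sw_cont[OF S, of "b0"] \<Delta> unfolding continuous_at_eps_delta
      by (metis divide_pos_pos zero_less_numeral)
    define \<tau> where "\<tau> = min t1 t2 / 2"
    have \<tau>: "\<tau> > 0" using t1 t2 unfolding \<tau>_def by simp
    have "\<bar>f (b + s) - f b\<bar> \<ge> \<Delta> / 2" if s: "s \<in> ball s0 \<tau>" and b: "b \<in> ball b0 \<tau>" for s b
    proof -
      have "dist (b + s) (b0 + s0) \<le> dist b b0 + dist s s0"
        by (metis dist_norm add_diff_add norm_triangle_ineq)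
      also have "\<dots> < t1" using s b unfolding \<tau>_def by (auto simp: dist_commute)
      finally have 1: "\<bar>f (b + s) - f (b0 + s0)\<bar> < \<Delta> / 4" using t1(2) by (simp add: dist_real_def)
      have "\<tau> \<le> t2 / 2" unfolding \<tau>_def by simp
      moreover have "dist b b0 < \<tau>" using b by (simp add: dist_commute)
      ultimately have "dist b b0 < t2" using zero_le_dist[of b b0] by linarith
      then have 2: "\<bar>f b - f b0\<bar> < \<Delta> / 4" using t2(2) by (simp add: dist_real_def)
      have "\<Delta> \<le> \<bar>f (b + s) - f (b0 + s0)\<bar> + \<bar>f (b + s) - f b\<bar> + \<bar>f b - f b0\<bar>"
        unfolding \<Delta>_def by (rule tri4)
      then show ?thesis using 1 2 by linarith
    qed
    then show ?thesis using \<Delta> \<tau> by (intro exI[of _ b0] exI[of _ "\<Delta> / 2"] exI[of _ \<tau>]) auto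
  qed
  then obtain B0 K0 T0 where BKT: "\<And>s0. s0 \<in> K \<Longrightarrow> K0 s0 > 0 \<and> T0 s0 > 0 \<and>
      (\<forall>s\<in>ball s0 (T0 s0). \<forall>b\<in>ball (B0 s0) (T0 s0). \<bar>f (b + s) - f b\<bar> \<ge> K0 s0)"
    by metis
  have "K \<subseteq> (\<Union>s0\<in>K. ball s0 (T0 s0))" using BKT by force
  then obtain F where F: "F \<subseteq> K" "finite F" "K \<subseteq> (\<Union>s0\<in>F. ball s0 (T0 s0))"
    using compactE_image[OF K, of K "\<lambda>s0. ball s0 (T0 s0)"] by blast
  define \<kappa> where "\<kappa> = Min (insert 1 (K0 ` F))"
  define \<tau> where "\<tau> = Min (insert 1 (T0 ` F))"
  have \<kappa>: "\<kappa> > 0" unfolding \<kappa>_def using F BKT by (subst Min_gr_iff) auto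
  have \<tau>: "\<tau> > 0" unfolding \<tau>_def using F BKT by (subst Min_gr_iff) auto
  have "\<exists>a. \<forall>b\<in>ball a \<tau>. \<bar>f (b + s) - f b\<bar> \<ge> \<kappa>" if "\<rho> \<le> norm s" "norm s \<le> L" for s
  proof -
    have "s \<in> K" using that unfolding K_def by auto
    then obtain s0 where s0: "s0 \<in> F" "s \<in> ball s0 (T0 s0)" using F by blast
    have "\<kappa> \<le> K0 s0" "\<tau> \<le> T0 s0" unfolding \<kappa>_def \<tau>_def using s0 F by auto
    moreover have "s0 \<in> K" using s0 F by blast
    ultimately have "\<forall>b\<in>ball (B0 s0) \<tau>. \<bar>f (b + s) - f b\<bar> \<ge> \<kappa>"
      using BKT[of s0] s0(2) by (meson mem_ball order_trans less_le_trans)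
    then show ?thesis by blast
  qed
  then show ?thesis using \<kappa> \<tau> by blast
qed

lemma lower_pointwise:
  "\<exists>c>0. \<exists>\<delta>>0. \<forall>s. \<exists>a. \<forall>b\<in>ball a \<delta>. \<bar>f (b + s) - f b\<bar> \<ge> c * min (norm s) 1"
proof -
  obtain c0 \<rho> where c0: "c0 > 0" "\<rho> > 0" and
    sm: "\<And>s. norm s < \<rho> \<Longrightarrow> (\<exists>a. \<forall>b\<in>ball a \<rho>. \<bar>f (b + s) - f b\<bar> \<ge> c0 * norm s)"
    using regime_small[OF S nz] by blast
  obtain \<kappa>1 \<rho>1 L where l: "\<kappa>1 > 0" "\<rho>1 > 0" and
    lg: "\<And>s. norm s \<ge> L \<Longrightarrow> (\<forall>b\<in>ball a0 \<rho>1. \<bar>f (b + s) - f b\<bar> \<ge> \<kappa>1)"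
    using regime_large by blast
  obtain \<kappa>2 \<tau> where m: "\<kappa>2 > 0" "\<tau> > 0" and
    md: "\<And>s. \<rho> \<le> norm s \<and> norm s \<le> L \<Longrightarrow> (\<exists>a. \<forall>b\<in>ball a \<tau>. \<bar>f (b + s) - f b\<bar> \<ge> \<kappa>2)"
    using regime_mid[OF c0(2), of L] by blast
  define c where "c = min c0 (min \<kappa>1 \<kappa>2)"
  define \<delta> where "\<delta> = min \<rho> (min \<rho>1 \<tau>)"
  have cp: "c > 0" "\<delta> > 0" unfolding c_def \<delta>_def using c0 l m by auto
  have "\<exists>a. \<forall>b\<in>ball a \<delta>. \<bar>f (b + s) - f b\<bar> \<ge> c * min (norm s) 1" for s
  proof -
    have mn: "c * min (norm s) 1 \<le> c" "c * min (norm s) 1 \<le> c * norm s"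
      using cp by (auto intro: mult_left_mono)
    have sub: "ball a \<delta> \<subseteq> ball a r" if "\<delta> \<le> r" for a r using that by auto
    consider "norm s < \<rho>" | "norm s \<ge> L" | "\<rho> \<le> norm s \<and> norm s \<le> L" by linarith
    then show ?thesis
    proof cases
      case 1
      then obtain a where a: "\<forall>b\<in>ball a \<rho>. \<bar>f (b + s) - f b\<bar> \<ge> c0 * norm s" using sm by blast
      have "c * norm s \<le> c0 * norm s" unfolding c_def by (intro mult_right_mono) auto
      then show ?thesis using a mn sub[of \<rho> a] unfolding \<delta>_def by (intro exI[of _ a]) force
    next
      case 2
      have "c \<le> \<kappa>1" unfolding c_def by simp
      then show ?thesis using lg[OF 2] mn sub[of \<rho>1 a0] unfolding \<delta>_def by (intro exI[of _ a0]) force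
    next
      case 3
      then obtain a where a: "\<forall>b\<in>ball a \<tau>. \<bar>f (b + s) - f b\<bar> \<ge> \<kappa>2" using md by blast
      have "c \<le> \<kappa>2" unfolding c_def by simp
      then show ?thesis using a mn sub[of \<tau> a] unfolding \<delta>_def by (intro exI[of _ a]) force
    qed
  qed
  then show ?thesis using cp by blast
qed

end

lemma lat_1[simp]: "lat p $ 1 = of_int (fst p)" and lat_2[simp]: "lat p $ 2 = of_int (snd p)"
  by (simp_all add: lat_def vector_2)

lemma int_interval:
  assumes "ell \<ge> 0"
  shows "\<exists>I::int set. finite I \<and> real (card I) \<ge> ell - 1 \<and> (\<forall>m\<in>I. lo \<le> of_int m \<and> of_int m \<le> lo + ell)"
proof -
  define I where "I = {\<lceil>lo\<rceil> .. \<lceil>lo\<rceil> + \<lfloor>ell\<rfloor> - 1}"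
  have "card I = nat \<lfloor>ell\<rfloor>" unfolding I_def by simp
  then have "real (card I) = of_int \<lfloor>ell\<rfloor>" using assms by simp
  then have "real (card I) \<ge> ell - 1" by linarith
  moreover have "lo \<le> of_int m \<and> of_int m \<le> lo + ell" if "m \<in> I" for m
  proof -
    have "\<lceil>lo\<rceil> \<le> m" "m \<le> \<lceil>lo\<rceil> + \<lfloor>ell\<rfloor> - 1" using that unfolding I_def by auto
    then have "of_int \<lceil>lo\<rceil> \<le> (of_int m::real)" "(of_int m::real) \<le> of_int \<lceil>lo\<rceil> + of_int \<lfloor>ell\<rfloor> - 1"
      by linarith+
    moreover have "lo \<le> of_int \<lceil>lo\<rceil>" "of_int \<lceil>lo\<rceil> < lo + 1" "of_int \<lfloor>ell\<rfloor> \<le> ell" by linarith+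
    ultimately show ?thesis by linarith
  qed
  moreover have "finite I" unfolding I_def by simp
  ultimately show ?thesis by blast
qed

lemma box_points:
  fixes a z :: "real^2"
  assumes r: "r > 0" and d: "d > 0" and rd: "r * d \<ge> 3"
  shows "\<exists>P. finite P \<and> real (card P) \<ge> (r * d / 3)^2 \<and> (\<forall>p\<in>P. (1 / r) *\<^sub>R (lat p + z) \<in> ball a d)"
proof -
  have l: "2 * (r * d) / 3 \<ge> 0" using r d by simp
  obtain I1 where I1: "finite I1" "real (card I1) \<ge> 2 * (r * d) / 3 - 1"
    "\<And>m. m \<in> I1 \<Longrightarrow> r * a$1 - z$1 - r * d / 3 \<le> of_int m \<and> of_int m \<le> r * a$1 - z$1 - r * d / 3 + 2 * (r * d) / 3"
    using int_interval[OF l, of "r * a$1 - z$1 - r * d / 3"] by blast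
  obtain I2 where I2: "finite I2" "real (card I2) \<ge> 2 * (r * d) / 3 - 1"
    "\<And>m. m \<in> I2 \<Longrightarrow> r * a$2 - z$2 - r * d / 3 \<le> of_int m \<and> of_int m \<le> r * a$2 - z$2 - r * d / 3 + 2 * (r * d) / 3"
    using int_interval[OF l, of "r * a$2 - z$2 - r * d / 3"] by blast
  have c1: "real (card I1) \<ge> r * d / 3" "real (card I2) \<ge> r * d / 3" using I1(2) I2(2) rd by linarith+
  have "real (card (I1 \<times> I2)) = real (card I1) * real (card I2)" by (simp add: card_cartesian_product)
  also have "\<dots> \<ge> (r * d / 3) * (r * d / 3)" using c1 r d by (intro mult_mono) auto
  finally have card: "real (card (I1 \<times> I2)) \<ge> (r * d / 3)^2" by (simp add: power2_eq_square)
  have inball: "(1 / r) *\<^sub>R (lat p + z) \<in> ball a d" if p: "p \<in> I1 \<times> I2" for p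
  proof -
    let ?b = "(1 / r) *\<^sub>R (lat p + z)"
    have "\<bar>of_int (fst p) + z$1 - r * a$1\<bar> \<le> r * d / 3"
    proof -
      have "fst p \<in> I1" using p by (auto simp: mem_Times_iff)
      from I1(3)[OF this] have "r * a$1 - z$1 - r * d / 3 \<le> of_int (fst p)" "of_int (fst p) \<le> r * a$1 - z$1 - r * d / 3 + 2 * (r * d) / 3"
        by blast+
      then show ?thesis by (simp only: abs_le_iff) linarith
    qed
    then have "\<bar>?b$1 - a$1\<bar> \<le> d / 3"
    proof -
      assume h: "\<bar>of_int (fst p) + z$1 - r * a$1\<bar> \<le> r * d / 3"
      have "?b$1 - a$1 = (of_int (fst p) + z$1 - r * a$1) / r" using r by (simp add: field_simps)
      then have "\<bar>?b$1 - a$1\<bar> = \<bar>of_int (fst p) + z$1 - r * a$1\<bar> / r" using r by simp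
      also have "\<dots> \<le> (r * d / 3) / r" using h r by (intro divide_right_mono) auto
      finally show ?thesis using r by simp
    qed
    moreover have "\<bar>of_int (snd p) + z$2 - r * a$2\<bar> \<le> r * d / 3"
    proof -
      have "snd p \<in> I2" using p by (auto simp: mem_Times_iff)
      from I2(3)[OF this] have "r * a$2 - z$2 - r * d / 3 \<le> of_int (snd p)" "of_int (snd p) \<le> r * a$2 - z$2 - r * d / 3 + 2 * (r * d) / 3"
        by blast+
      then show ?thesis by (simp only: abs_le_iff) linarith
    qed
    then have "\<bar>?b$2 - a$2\<bar> \<le> d / 3"
    proof -
      assume h: "\<bar>of_int (snd p) + z$2 - r * a$2\<bar> \<le> r * d / 3"
      have "?b$2 - a$2 = (of_int (snd p) + z$2 - r * a$2) / r" using r by (simp add: field_simps)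
      then have "\<bar>?b$2 - a$2\<bar> = \<bar>of_int (snd p) + z$2 - r * a$2\<bar> / r" using r by simp
      also have "\<dots> \<le> (r * d / 3) / r" using h r by (intro divide_right_mono) auto
      finally show ?thesis using r by simp
    qed
    ultimately have "norm (?b - a) \<le> 2 * d / 3" using norm_le_abs12[of "?b - a"] by simp
    then have "dist a ?b < d" using d by (simp add: dist_norm norm_minus_commute)
    then show ?thesis by simp
  qed
  show ?thesis using card inball I1(1) I2(1) by (intro exI[of _ "I1 \<times> I2"]) auto
qed

context fixes f :: "real^2 \<Rightarrow> real" and a0 assumes S: "schwartz2 f" and nz: "f a0 \<noteq> 0"
begin

lemma lower_lattice:
  "\<exists>c>0. \<exists>r0>0. \<forall>r\<ge>r0. \<forall>y z. \<exists>P. finite P \<and>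
     (\<Sum>p\<in>P. (f ((1 / r) *\<^sub>R (lat p + y)) - f ((1 / r) *\<^sub>R (lat p + z)))^2) \<ge> c * min ((norm (y - z))^2) (r^2)"
proof -
  obtain c \<delta> where c: "c > 0" "\<delta> > 0" and pw: "\<And>s. \<exists>a. \<forall>b\<in>ball a \<delta>. \<bar>f (b + s) - f b\<bar> \<ge> c * min (norm s) 1"
    using lower_pointwise[OF S nz] by blast
  define r0 where "r0 = 3 / \<delta>"
  have r0: "r0 > 0" using c unfolding r0_def by simp
  have "\<exists>P. finite P \<and>
     (\<Sum>p\<in>P. (f ((1 / r) *\<^sub>R (lat p + y)) - f ((1 / r) *\<^sub>R (lat p + z)))^2) \<ge> (c^2 * (\<delta>/3)^2) * min ((norm (y - z))^2) (r^2)"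
    if r: "r \<ge> r0" for r y z
  proof -
    have rp: "r > 0" using r r0 by simp
    have rd: "r * \<delta> \<ge> 3" using r c unfolding r0_def by (simp add: field_simps)
    define s where "s = (1 / r) *\<^sub>R (y - z)"
    obtain a where a: "\<forall>b\<in>ball a \<delta>. \<bar>f (b + s) - f b\<bar> \<ge> c * min (norm s) 1" using pw by blast
    obtain P where P: "finite P" "real (card P) \<ge> (r * \<delta> / 3)^2" "\<forall>p\<in>P. (1 / r) *\<^sub>R (lat p + z) \<in> ball a \<delta>"
      using box_points[OF rp c(2) rd, of z a] by blast
    have tm: "(f ((1 / r) *\<^sub>R (lat p + y)) - f ((1 / r) *\<^sub>R (lat p + z)))^2 \<ge> (c * min (norm s) 1)^2"
      if "p \<in> P" for p
    proof -
      have e: "(1 / r) *\<^sub>R (lat p + y) = (1 / r) *\<^sub>R (lat p + z) + s" unfolding s_def by (simp add: algebra_simps)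
      have "\<bar>f ((1 / r) *\<^sub>R (lat p + y)) - f ((1 / r) *\<^sub>R (lat p + z))\<bar> \<ge> c * min (norm s) 1"
        using a P(3) that unfolding e by blast
      moreover have "c * min (norm s) 1 \<ge> 0" using c by simp
      ultimately show ?thesis by (metis abs_le_square_iff abs_of_nonneg power2_abs)
    qed
    have "(\<Sum>p\<in>P. (f ((1 / r) *\<^sub>R (lat p + y)) - f ((1 / r) *\<^sub>R (lat p + z)))^2) \<ge> real (card P) * (c * min (norm s) 1)^2"
      using sum_mono[OF tm] by simp
    moreover have "real (card P) * (c * min (norm s) 1)^2 \<ge> (r * \<delta> / 3)^2 * (c * min (norm s) 1)^2"
      using P(2) by (intro mult_right_mono) auto
    moreover have "(r * \<delta> / 3)^2 * (c * min (norm s) 1)^2 = (c^2 * (\<delta>/3)^2) * (r^2 * (min (norm s) 1)^2)"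
      by (simp add: power_mult_distrib field_simps)
    moreover have "r^2 * (min (norm s) 1)^2 = min ((norm (y - z))^2) (r^2)"
    proof -
      have ns: "norm s = norm (y - z) / r" unfolding s_def using rp by simp
      have "r^2 * (min (norm s) 1)^2 = (min (r * norm s) r)^2"
        using rp by (simp add: power_mult_distrib[symmetric] min_mult_distrib_left)
      also have "r * norm s = norm (y - z)" using ns rp by simp
      also have "(min (norm (y - z)) r)^2 = min ((norm (y - z))^2) (r^2)"
        using rp by (cases "norm (y - z) \<le> r") (auto simp: min_def power_mono intro: power_mono)
      finally show ?thesis .
    qed
    ultimately show ?thesis using P(1) by (intro exI[of _ P]) auto
  qed
  moreover have "c^2 * (\<delta>/3)^2 > 0" using c by simp
  ultimately show ?thesis using r0 by blast
qed

end

definition rho :: "real^2 \<Rightarrow> real" where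
  "rho z = 1 / ((1 + \<bar>z$1\<bar>)^2 * (1 + \<bar>z$2\<bar>)^2)"

lemma rho_pos: "rho z > 0" and rho_le1: "rho z \<le> 1"
  unfolding rho_def by (auto simp: field_simps intro!: one_le_power mult_ge1_I)

lemma rho_bound: "(1 + norm z) ^ 4 * rho z \<ge> 1"
proof -
  have a: "(1 + \<bar>z$1\<bar>) * (1 + \<bar>z$2\<bar>) \<le> (1 + norm z) * (1 + norm z)"
    by (intro mult_mono add_left_mono component_le_norm_cart) auto
  have "(1 + \<bar>z$1\<bar>)^2 * (1 + \<bar>z$2\<bar>)^2 = ((1 + \<bar>z$1\<bar>) * (1 + \<bar>z$2\<bar>))^2" by (simp add: power_mult_distrib)
  also have "\<dots> \<le> ((1 + norm z) * (1 + norm z))^2" using a by (intro power_mono) auto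
  also have "\<dots> = (1 + norm z) ^ 4" by (simp add: power_mult_distrib[symmetric] power2_eq_square[symmetric] power_mult[symmetric])
  finally have "(1 + \<bar>z$1\<bar>)^2 * (1 + \<bar>z$2\<bar>)^2 \<le> (1 + norm z) ^ 4" .
  moreover have "(1 + \<bar>z$1\<bar>)^2 * (1 + \<bar>z$2\<bar>)^2 > 0" by (auto intro!: mult_pos_pos)
  ultimately show ?thesis unfolding rho_def by (simp add: field_simps)
qed

lemma decay_rho:
  assumes "\<bar>g x\<bar> * (1 + norm x) ^ 4 \<le> C"
  shows "\<bar>g x\<bar> \<le> C * rho x"
proof -
  have "\<bar>g x\<bar> \<le> \<bar>g x\<bar> * ((1 + norm x) ^ 4 * rho x)" using rho_bound[of x]
    by (metis abs_ge_zero mult.right_neutral mult_left_mono)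
  also have "\<dots> = (\<bar>g x\<bar> * (1 + norm x) ^ 4) * rho x" by (simp add: algebra_simps)
  also have "\<dots> \<le> C * rho x" using assms rho_pos[of x] by (intro mult_right_mono) auto
  finally show ?thesis .
qed

lemma decay_rho_near:
  fixes w a :: "real^2"
  assumes "\<bar>g w\<bar> * (1 + norm w) ^ 4 \<le> C" and "dist w a \<le> 1"
  shows "\<bar>g w\<bar> \<le> 16 * C * rho a"
proof -
  have C: "C \<ge> 0" using assms(1) by (smt (verit) zero_le_mult_iff abs_ge_zero zero_le_power norm_ge_zero)
  have "norm a \<le> norm w + 1" using assms(2) by (metis dist_commute dist_triangle dist_0_norm add_le_cancel_left order_trans add.commute)
  moreover have "1 + x \<le> 2 * (1 + y)" if "x \<le> y + 1" "0 \<le> y" for x y :: real unfolding distrib_left using that by linarith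
  ultimately have "1 + norm a \<le> 2 * (1 + norm w)" using norm_ge_zero[of w] by blast
  then have "(1 + norm a) ^ 4 \<le> (2 * (1 + norm w)) ^ 4" by (intro power_mono) auto
  also have "(2 * (1 + norm w)) ^ 4 = 16 * (1 + norm w) ^ 4" by (simp only: power_mult_distrib) simp
  finally have h: "(1 + norm a) ^ 4 \<le> 16 * (1 + norm w) ^ 4" .
  have "\<bar>g w\<bar> * (1 + norm a) ^ 4 \<le> \<bar>g w\<bar> * (16 * (1 + norm w) ^ 4)"
    using h by (intro mult_left_mono) auto
  also have "\<dots> \<le> 16 * C" using assms(1) by simp
  finally have "\<bar>g w\<bar> * (1 + norm a) ^ 4 \<le> 16 * C" .
  then show ?thesis using decay_rho[of "\<lambda>_. g w" a "16 * C"] by simp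
qed

lemma tele_sum: "r > 0 \<Longrightarrow> (\<Sum>k\<in>{1..N}. (r / (r + real k))^2) \<le> r - r^2 / (r + real N)"
proof (induction N)
  case 0 then show ?case by (simp add: power2_eq_square)
next
  case (Suc N)
  have "(r / (r + real (Suc N)))^2 \<le> r^2 / (r + real N) - r^2 / (r + real (Suc N))"
  proof -
    have p: "r + real N > 0" "r + real (Suc N) > 0" using Suc by auto
    have "(r / (r + real (Suc N)))^2 = r^2 / ((r + real (Suc N)) * (r + real (Suc N)))"
      by (simp add: power2_eq_square)
    also have "\<dots> \<le> r^2 / ((r + real N) * (r + real (Suc N)))"
      using p by (intro divide_left_mono mult_right_mono mult_pos_pos) auto
    also have "\<dots> = r^2 / (r + real N) - r^2 / (r + real (Suc N))"
      using p by (simp add: field_simps)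
    finally show ?thesis .
  qed
  then show ?case using Suc by simp
qed

lemma psi_sum: "r > 0 \<Longrightarrow> (\<Sum>k\<le>N. (r / (r + real k))^2) \<le> 1 + r"
proof -
  assume r: "r > 0"
  have "{..N} = insert 0 {1..N}" by auto
  then have "(\<Sum>k\<le>N. (r / (r + real k))^2) = 1 + (\<Sum>k\<in>{1..N}. (r / (r + real k))^2)"
    using r by simp
  also have "\<dots> \<le> 1 + (r - r^2 / (r + real N))" using tele_sum[OF r, of N] by simp
  also have "\<dots> \<le> 1 + r" using r by simp
  finally show ?thesis .
qed

lemma phi_sum_1d:
  fixes A :: "int set" and t r :: real
  assumes r: "r > 0" and A: "finite A"
  shows "(\<Sum>m\<in>A. 1 / (1 + \<bar>(of_int m + t) / r\<bar>)^2) \<le> 2 * (1 + r)"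
proof -
  define g where "g m = (if of_int m + t \<ge> 0 then (0::nat, nat \<lfloor>of_int m + t\<rfloor>) else (1, nat \<lfloor>- (of_int m + t)\<rfloor>))" for m :: int
  define \<Psi> where "\<Psi> q = (r / (r + real (snd q)))^2" for q :: "nat \<times> nat"
  have inj: "inj_on g A"
  proof (rule inj_onI)
    fix m m' assume "g m = g m'"
    then have eq: "g m = g m'" .
    have fl: "\<lfloor>of_int k + t\<rfloor> = k + \<lfloor>t\<rfloor>" "\<lfloor>- (of_int k + t)\<rfloor> = - k + \<lfloor>- t\<rfloor>" for k :: int
      using floor_add_int[of t k] floor_add_int[of "-t" "-k"] by (simp_all add: add.commute)
    show "m = m'"
    proof (cases "of_int m + t \<ge> 0")
      case True
      then have "of_int m' + t \<ge> 0" using eq unfolding g_def by (auto split: if_splits)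
      with True eq have "nat \<lfloor>of_int m + t\<rfloor> = nat \<lfloor>of_int m' + t\<rfloor>" unfolding g_def by simp
      moreover have "\<lfloor>of_int m + t\<rfloor> \<ge> 0" "\<lfloor>of_int m' + t\<rfloor> \<ge> 0" using True \<open>of_int m' + t \<ge> 0\<close>
        by (simp_all only: zero_le_floor)
      ultimately have "\<lfloor>of_int m + t\<rfloor> = \<lfloor>of_int m' + t\<rfloor>" by simp
      then show ?thesis unfolding fl by simp
    next
      case False
      then have F': "\<not> of_int m' + t \<ge> 0" using eq unfolding g_def by (auto split: if_splits)
      with False eq have "nat \<lfloor>- (of_int m + t)\<rfloor> = nat \<lfloor>- (of_int m' + t)\<rfloor>" unfolding g_def by simp
      moreover have "\<lfloor>- (of_int m + t)\<rfloor> \<ge> 0" "\<lfloor>- (of_int m' + t)\<rfloor> \<ge> 0" using False F'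
        by (simp_all only: zero_le_floor)
      ultimately have "\<lfloor>- (of_int m + t)\<rfloor> = \<lfloor>- (of_int m' + t)\<rfloor>" using eq_nat_nat_iff by blast
      then show ?thesis unfolding fl by simp
    qed
  qed
  have le: "1 / (1 + \<bar>(of_int m + t) / r\<bar>)^2 \<le> \<Psi> (g m)" for m
  proof -
    define k where "k = real (snd (g m))"
    have k: "0 \<le> k" "k \<le> \<bar>of_int m + t\<bar>" unfolding k_def g_def by auto linarith+
    have "1 / (1 + \<bar>(of_int m + t) / r\<bar>)^2 = (r / (r + \<bar>of_int m + t\<bar>))^2"
      using r by (simp add: field_simps abs_div)
    also have "\<dots> \<le> (r / (r + k))^2"
      using r k by (intro power_mono divide_left_mono) auto
    finally show ?thesis unfolding \<Psi>_def k_def .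
  qed
  have "finite (snd ` g ` A)" using A by simp
  then obtain N where N0: "\<forall>k\<in>snd ` g ` A. k \<le> N"
    using finite_nat_set_iff_bounded_le by blast
  have N: "\<forall>q\<in>g ` A. snd q \<le> N"
  proof
    fix q assume "q \<in> g ` A"
    then have "snd q \<in> snd ` g ` A" by (rule imageI)
    then show "snd q \<le> N" using N0 by blast
  qed
  have "(\<Sum>m\<in>A. 1 / (1 + \<bar>(of_int m + t) / r\<bar>)^2) \<le> (\<Sum>m\<in>A. \<Psi> (g m))" using le by (rule sum_mono)
  also have "\<dots> = (\<Sum>q\<in>g ` A. \<Psi> q)" using sum.reindex[OF inj, of \<Psi>] by simp
  also have "\<dots> \<le> (\<Sum>q\<in>{0,1} \<times> {..N}. \<Psi> q)"
  proof (rule sum_mono2)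
    show "g ` A \<subseteq> {0, 1} \<times> {..N}"
    proof
      fix q assume q: "q \<in> g ` A"
      have "fst q \<in> {0,1}" using q by (auto simp: g_def)
      moreover have "snd q \<le> N" using N q by blast
      ultimately show "q \<in> {0,1} \<times> {..N}" by (cases q) auto
    qed
  qed (auto simp: \<Psi>_def)
  also have "\<dots> = (\<Sum>i\<in>{0,1::nat}. \<Sum>k\<le>N. \<Psi> (i, k))"
    by (simp add: sum.cartesian_product)
  also have "\<dots> = 2 * (\<Sum>k\<le>N. (r / (r + real k))^2)"
    by (simp add: \<Psi>_def)
  also have "\<dots> \<le> 2 * (1 + r)" using psi_sum[OF r, of N] by simp
  finally show ?thesis .
qed

lemma rho_sum:
  assumes r: "r > 0" and P: "finite P"
  shows "(\<Sum>p\<in>P. rho ((1 / r) *\<^sub>R (lat p + y))) \<le> 4 * (1 + r)^2"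
proof -
  define \<phi>1 where "\<phi>1 m = 1 / (1 + \<bar>(of_int m + y$1) / r\<bar>)^2" for m :: int
  define \<phi>2 where "\<phi>2 m = 1 / (1 + \<bar>(of_int m + y$2) / r\<bar>)^2" for m :: int
  have e: "rho ((1 / r) *\<^sub>R (lat p + y)) = \<phi>1 (fst p) * \<phi>2 (snd p)" for p
    unfolding rho_def \<phi>1_def \<phi>2_def by (simp add: divide_inverse mult.commute)
  have "(\<Sum>p\<in>P. rho ((1 / r) *\<^sub>R (lat p + y))) \<le> (\<Sum>p\<in>fst ` P \<times> snd ` P. \<phi>1 (fst p) * \<phi>2 (snd p))"
    unfolding e by (rule sum_mono2) (auto simp: P \<phi>1_def \<phi>2_def intro: rev_image_eqI)
  also have "\<dots> = (\<Sum>m\<in>fst ` P. \<phi>1 m) * (\<Sum>m\<in>snd ` P. \<phi>2 m)"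
    by (simp add: sum_product sum.cartesian_product case_prod_beta)
  also have "\<dots> \<le> (2 * (1 + r)) * (2 * (1 + r))"
    using phi_sum_1d[OF r, of "fst ` P" "y$1"] phi_sum_1d[OF r, of "snd ` P" "y$2"] P r
    unfolding \<phi>1_def \<phi>2_def by (intro mult_mono sum_nonneg) auto
  finally show ?thesis by (simp add: power2_eq_square algebra_simps)
qed


lemma sq_diff_le: "(u - v)^2 \<le> 2 * u^2 + 2 * (v::real)^2"
proof -
  have "0 \<le> (u + v)^2" by simp
  moreover have "(u - v)^2 + (u + v)^2 = 2 * u^2 + 2 * v^2" by (simp add: power2_eq_square algebra_simps)
  ultimately show ?thesis by linarith
qed

context fixes f :: "real^2 \<Rightarrow> real" assumes S: "schwartz2 f"
begin

lemma f_rho: "\<exists>C\<ge>0. \<forall>x. \<bar>f x\<bar> \<le> C * rho x"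
proof -
  obtain C where C: "\<And>x. \<bar>f x\<bar> * (1 + norm x) ^ 4 \<le> C" using sw_decay[OF S] by blast
  have "C \<ge> 0" using C[of 0] by (smt (verit) zero_le_mult_iff abs_ge_zero zero_le_power norm_ge_zero)
  moreover have "\<bar>f x\<bar> \<le> C * rho x" for x by (rule decay_rho[of f x C]) (rule C)
  ultimately show ?thesis by blast
qed

lemma PD_rho: "\<exists>C\<ge>0. \<forall>i w a. dist w a \<le> 1 \<longrightarrow> \<bar>PD f i w\<bar> \<le> C * rho a"
proof -
  obtain C where C: "\<And>i x. \<bar>PD f i x\<bar> * (1 + norm x) ^ 4 \<le> C" using sw_decayPD[OF S] by blast
  have "C \<ge> 0" using C[of 1 0] by (smt (verit) zero_le_mult_iff abs_ge_zero zero_le_power norm_ge_zero)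
  moreover have "\<bar>PD f i w\<bar> \<le> 16 * C * rho a" if "dist w a \<le> 1" for i w a
    by (rule decay_rho_near[of "PD f i" w C a]) (auto intro: C that)
  ultimately show ?thesis by (intro exI[of _ "16 * C"]) auto
qed

lemma f_sum_bound: "\<exists>C. \<forall>r>0. \<forall>y P. finite P \<longrightarrow> (\<Sum>p\<in>P. \<bar>f ((1 / r) *\<^sub>R (lat p + y))\<bar>) \<le> C * (1 + r)^2"
proof -
  obtain C where C: "C \<ge> 0" "\<And>x. \<bar>f x\<bar> \<le> C * rho x" using f_rho by blast
  have "(\<Sum>p\<in>P. \<bar>f ((1 / r) *\<^sub>R (lat p + y))\<bar>) \<le> (4 * C) * (1 + r)^2" if "r > 0" "finite P" for r y P
  proof -
    have "(\<Sum>p\<in>P. \<bar>f ((1 / r) *\<^sub>R (lat p + y))\<bar>) \<le> (\<Sum>p\<in>P. C * rho ((1 / r) *\<^sub>R (lat p + y)))"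
      using C by (intro sum_mono) auto
    also have "\<dots> = C * (\<Sum>p\<in>P. rho ((1 / r) *\<^sub>R (lat p + y)))" by (simp add: sum_distrib_left)
    also have "\<dots> \<le> C * (4 * (1 + r)^2)" using rho_sum[OF that] C by (intro mult_left_mono) auto
    finally show ?thesis by simp
  qed
  then show ?thesis by blast
qed

lemma upper_lattice: "\<exists>K. \<forall>r>0. \<forall>y P. finite P \<longrightarrow>
   (\<Sum>p\<in>P. (f ((1 / r) *\<^sub>R (lat p + y)) - f ((1 / r) *\<^sub>R lat p))^2) \<le> K * (1 + (norm y)^2)"
proof -
  obtain C0 where C0: "C0 \<ge> 0" "\<And>x. \<bar>f x\<bar> \<le> C0 * rho x" using f_rho by blast
  obtain C1 where C1: "C1 \<ge> 0" "\<And>i w a. dist w a \<le> 1 \<Longrightarrow> \<bar>PD f i w\<bar> \<le> C1 * rho a" using PD_rho by blast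
  define K where "K = 64 * C0^2 + 64 * C1^2"
  have sq: "(f x)^2 \<le> C0^2 * rho x" for x
  proof -
    have "(f x)^2 = \<bar>f x\<bar>^2" by simp
    also have "\<dots> \<le> (C0 * rho x)^2" using C0(2)[of x] by (intro power_mono) auto
    also have "\<dots> = C0^2 * (rho x * rho x)" by (simp add: power2_eq_square)
    also have "\<dots> \<le> C0^2 * rho x" using rho_le1[of x] rho_pos[of x] by (intro mult_left_mono) (auto simp: mult_le_cancel_left1)
    finally show ?thesis .
  qed
  have main: "(\<Sum>p\<in>P. (f ((1 / r) *\<^sub>R (lat p + y)) - f ((1 / r) *\<^sub>R lat p))^2) \<le> K * (1 + (norm y)^2)"
    if r: "r > 0" and P: "finite P" for r y P
  proof -
    let ?b = "\<lambda>p. (1 / r) *\<^sub>R lat p"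
    define s where "s = (1 / r) *\<^sub>R y"
    have bs: "(1 / r) *\<^sub>R (lat p + y) = ?b p + s" for p unfolding s_def by (simp add: algebra_simps)
    have crude: "(\<Sum>p\<in>P. (f ((1 / r) *\<^sub>R (lat p + y)) - f (?b p))^2) \<le> 16 * C0^2 * (1 + r)^2"
    proof -
      have "(\<Sum>p\<in>P. (f ((1 / r) *\<^sub>R (lat p + y)) - f (?b p))^2)
          \<le> (\<Sum>p\<in>P. 2 * C0^2 * rho ((1 / r) *\<^sub>R (lat p + y)) + 2 * C0^2 * rho ((1 / r) *\<^sub>R (lat p + 0)))"
      proof (rule sum_mono)
        fix p
        have "(f ((1 / r) *\<^sub>R (lat p + y)) - f (?b p))^2 \<le> 2 * (f ((1 / r) *\<^sub>R (lat p + y)))^2 + 2 * (f (?b p))^2"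
          by (rule sq_diff_le)
        also have "\<dots> \<le> 2 * C0^2 * rho ((1 / r) *\<^sub>R (lat p + y)) + 2 * C0^2 * rho ((1 / r) *\<^sub>R (lat p + 0))"
          using sq[of "(1 / r) *\<^sub>R (lat p + y)"] sq[of "?b p"] by simp
        finally show "(f ((1 / r) *\<^sub>R (lat p + y)) - f (?b p))^2 \<le> \<dots>" .
      qed
      also have "\<dots> = 2 * C0^2 * (\<Sum>p\<in>P. rho ((1 / r) *\<^sub>R (lat p + y))) + 2 * C0^2 * (\<Sum>p\<in>P. rho ((1 / r) *\<^sub>R (lat p + 0)))"
        by (simp add: sum.distrib sum_distrib_left)
      also have "\<dots> \<le> 2 * C0^2 * (4 * (1 + r)^2) + 2 * C0^2 * (4 * (1 + r)^2)"
        using rho_sum[OF r P, of y] rho_sum[OF r P, of 0]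
        by (intro add_mono mult_left_mono) auto
      finally show ?thesis by simp
    qed
    show ?thesis
    proof (cases "r \<le> 1")
      case True
      have "(1 + r)^2 \<le> 2^2" using True r by (intro power_mono) auto
      then have "16 * C0^2 * (1 + r)^2 \<le> 16 * C0^2 * 2^2" by (intro mult_left_mono) auto
      then have "16 * C0^2 * (1 + r)^2 \<le> 64 * C0^2" by simp
      also have "\<dots> \<le> K * (1 + (norm y)^2)" unfolding K_def
        by (simp add: algebra_simps add_nonneg_nonneg)
      finally show ?thesis using crude by simp
    next
      case False
      then have r1: "r > 1" by simp
      have r2: "(1 + r)^2 \<le> 4 * r^2"
      proof -
        have "(1 + r)^2 \<le> (2 * r)^2" using r1 by (intro power_mono) auto
        then show ?thesis by (simp add: power_mult_distrib)
      qed
      show ?thesis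
      proof (cases "norm y \<ge> r")
        case True
        have "r^2 \<le> (norm y)^2" using True r by (intro power_mono) auto
        then have "16 * C0^2 * (1 + r)^2 \<le> 16 * C0^2 * (4 * (norm y)^2)"
          using r2 by (intro mult_left_mono) auto
        also have "\<dots> \<le> K * (1 + (norm y)^2)" unfolding K_def
          by (simp add: algebra_simps add_nonneg_nonneg)
        finally show ?thesis using crude by simp
      next
        case False
        have ns: "norm s = norm y / r" unfolding s_def using r by simp
        have "norm y / r \<le> 1" using False r by (simp add: divide_le_eq_1_pos)
        then have s1: "norm s \<le> 1" using ns by simp
        have fine: "(f (?b p + s) - f (?b p))^2 \<le> (2 * C1)^2 * rho (?b p) * (norm s)^2" for p
        proof -
          let ?f' = "\<lambda>x (h::real^2). h$1 * PD f 1 x + h$2 * PD f 2 x"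
          have "norm (f (?b p + s) - f (?b p)) \<le> (2 * C1 * rho (?b p)) * norm (?b p + s - ?b p)"
          proof (rule differentiable_bound[where S = "cball (?b p) 1" and f' = ?f'])
            show "convex (cball (?b p) 1)" by simp
            show "(f has_derivative ?f' x) (at x within cball (?b p) 1)" for x
              using sw_deriv[OF S] by (rule has_derivative_at_withinI)
            show "onorm (?f' x) \<le> 2 * C1 * rho (?b p)" if "x \<in> cball (?b p) 1" for x
            proof -
              have "dist x (?b p) \<le> 1" using that by (simp add: dist_commute)
              then have "\<bar>PD f 1 x\<bar> + \<bar>PD f 2 x\<bar> \<le> 2 * C1 * rho (?b p)"
                using C1(2)[of x "?b p" 1] C1(2)[of x "?b p" 2] by simp
              then show ?thesis using onorm_lin2[of "PD f 1 x" "PD f 2 x"] by simp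
            qed
            show "?b p + s \<in> cball (?b p) 1" using s1 by (simp add: dist_norm)
            show "?b p \<in> cball (?b p) 1" by simp
          qed
          then have "\<bar>f (?b p + s) - f (?b p)\<bar> \<le> 2 * C1 * rho (?b p) * norm s" by simp
          then have "(f (?b p + s) - f (?b p))^2 \<le> (2 * C1 * rho (?b p) * norm s)^2"
            by (metis abs_ge_zero order_trans power2_abs power_mono)
          also have "\<dots> = (2 * C1)^2 * (rho (?b p) * rho (?b p)) * (norm s)^2" by (simp add: power2_eq_square)
          also have "\<dots> \<le> (2 * C1)^2 * rho (?b p) * (norm s)^2"
            using rho_le1[of "?b p"] rho_pos[of "?b p"]
            by (intro mult_right_mono mult_left_mono) (auto simp: mult_le_cancel_left1)
          finally show ?thesis .
        qed
        have "(\<Sum>p\<in>P. (f ((1 / r) *\<^sub>R (lat p + y)) - f (?b p))^2) \<le> (\<Sum>p\<in>P. (2 * C1)^2 * rho (?b p) * (norm s)^2)"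
          unfolding bs using fine by (rule sum_mono)
        also have "\<dots> = (2 * C1)^2 * (norm s)^2 * (\<Sum>p\<in>P. rho ((1 / r) *\<^sub>R (lat p + 0)))"
          by (simp add: sum_distrib_left algebra_simps)
        also have "\<dots> \<le> (2 * C1)^2 * (norm s)^2 * (4 * (4 * r^2))"
          using rho_sum[OF r P, of 0] r2 by (intro mult_left_mono) auto
        also have "\<dots> = 64 * C1^2 * (norm y)^2"
          unfolding ns using r by (simp add: field_simps power2_eq_square)
        also have "\<dots> \<le> K * (1 + (norm y)^2)" unfolding K_def
          by (simp add: algebra_simps add_nonneg_nonneg)
        finally show ?thesis by simp
      qed
    qed
  qed
  then show ?thesis by blast
qed

end

definition en :: "nat \<Rightarrow> int \<times> int" where "en = from_nat_into UNIV"

lemma bij_en: "bij en"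
proof -
  have "infinite (UNIV :: (int \<times> int) set)" by (simp add: finite_prod infinite_UNIV_int)
  then show ?thesis unfolding en_def bij_def[symmetric]
    by (intro bij_betw_from_nat_into) auto
qed

lemma inj_en: "inj en" using bij_en bij_is_inj by blast
lemma surj_en: "surj en" using bij_en bij_is_surj by blast

lemma infsum_en:
  fixes g :: "int \<times> int \<Rightarrow> real"
  shows "infsum g UNIV = (if summable (\<lambda>k. \<bar>g (en k)\<bar>) then suminf (\<lambda>k. g (en k)) else 0)"
proof -
  have e: "infsum g UNIV = infsum (\<lambda>k. g (en k)) UNIV"
    using infsum_reindex_bij_betw[of en UNIV UNIV g] bij_en by (simp add: bij_def)
  show ?thesis
  proof (cases "summable (\<lambda>k. \<bar>g (en k)\<bar>)")
    case True
    then have "summable (\<lambda>k. g (en k))" by (rule summable_rabs_cancel)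
    then have "((\<lambda>k. g (en k)) has_sum suminf (\<lambda>k. g (en k))) UNIV"
      using True by (intro norm_summable_imp_has_sum) (auto simp: summable_sums)
    then show ?thesis using True e by (simp add: infsumI)
  next
    case False
    have "\<not> (\<lambda>k. g (en k)) summable_on UNIV"
    proof
      assume "(\<lambda>k. g (en k)) summable_on UNIV"
      then have "(\<lambda>k. norm (g (en k))) summable_on UNIV" by (rule summable_on_iff_abs_summable_on_real[THEN iffD1])
      then have "summable (\<lambda>k. norm (g (en k)))" by (rule summable_on_imp_summable)
      with False show False by simp
    qed
    then show ?thesis using False e by (simp add: infsum_not_exists)
  qed
qed

lemma en_sum_le:
  fixes g :: "int \<times> int \<Rightarrow> real"
  assumes "\<And>P. finite P \<Longrightarrow> (\<Sum>p\<in>P. g p) \<le> B" "\<And>p. g p \<ge> 0"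
  shows "(\<Sum>k. ennreal (g (en k))) \<le> ennreal B"
proof -
  have "(\<Sum>k<n. ennreal (g (en k))) \<le> ennreal B" for n
  proof -
    have "(\<Sum>k<n. ennreal (g (en k))) = ennreal (\<Sum>k<n. g (en k))" using assms(2) by simp
    also have "(\<Sum>k<n. g (en k)) = (\<Sum>p\<in>en ` {..<n}. g p)"
      using sum.reindex[of en "{..<n}" g] inj_en by (simp add: inj_on_def)
    also have "\<dots> \<le> B" using assms(1) by simp
    finally show ?thesis by (simp add: ennreal_leI)
  qed
  then show ?thesis unfolding suminf_eq_SUP by (rule SUP_least)
qed

lemma en_sum_ge:
  fixes g :: "int \<times> int \<Rightarrow> real"
  assumes P: "finite P" and nn: "\<And>p. g p \<ge> 0"
  shows "ennreal (\<Sum>p\<in>P. g p) \<le> (\<Sum>k. ennreal (g (en k)))"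
proof -
  define n where "n = Suc (Max (insert 0 (inv en ` P)))"
  have sub: "P \<subseteq> en ` {..<n}"
  proof
    fix p assume p: "p \<in> P"
    have "inv en p \<le> Max (insert 0 (inv en ` P))" using P p by auto
    then have "inv en p < n" unfolding n_def by simp
    moreover have "en (inv en p) = p" using surj_en by (simp add: surj_f_inv_f)
    ultimately show "p \<in> en ` {..<n}" by (metis imageI lessThan_iff)
  qed
  have "(\<Sum>p\<in>P. g p) \<le> (\<Sum>p\<in>en ` {..<n}. g p)" using sub nn by (intro sum_mono2) auto
  also have "\<dots> = (\<Sum>k<n. g (en k))"
    using sum.reindex[of en "{..<n}" g] inj_en by (simp add: inj_on_def)
  finally have "ennreal (\<Sum>p\<in>P. g p) \<le> ennreal (\<Sum>k<n. g (en k))" by (rule ennreal_leI)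
  also have "\<dots> = (\<Sum>k<n. ennreal (g (en k)))" using nn by simp
  also have "\<dots> \<le> (\<Sum>k. ennreal (g (en k)))" by (rule sum_le_suminf) auto
  finally show ?thesis .
qed

lemma (in prob_space) indep_pair:
  assumes "indep_vars (\<lambda>_. borel) X UNIV" "p \<noteq> q"
  shows "indep_var borel (X p) borel (X q)"
proof -
  have "indep_var (PiM {p} (\<lambda>_. borel)) (\<lambda>\<omega>. restrict (\<lambda>i. X i \<omega>) {p})
                  (PiM {q} (\<lambda>_. borel)) (\<lambda>\<omega>. restrict (\<lambda>i. X i \<omega>) {q})"
    using assms by (intro indep_var_restrict) auto
  from indep_var_compose[OF this measurable_component_singleton measurable_component_singleton]
  show ?thesis by (simp add: comp_def)
qed

locale LS = prob_space M for M :: "'a measure" +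
  fixes f :: "real^2 \<Rightarrow> real" and \<xi> :: "int \<times> int \<Rightarrow> 'a \<Rightarrow> real^2"
  assumes S: "schwartz2 f" and xi_meas[measurable]: "\<And>p. \<xi> p \<in> borel_measurable M"
    and ind: "indep_vars (\<lambda>_. borel) \<xi> UNIV"
    and idist: "\<And>p. distr M borel (\<xi> p) = distr M borel (\<xi> (0, 0))"
begin

definition h :: "real \<Rightarrow> int \<times> int \<Rightarrow> real^2 \<Rightarrow> real" where
  "h r p v = f ((1 / r) *\<^sub>R (lat p + v))"
definition G :: "real \<Rightarrow> nat \<Rightarrow> 'a \<Rightarrow> real" where
  "G r k \<omega> = h r (en k) (\<xi> (en k) \<omega>)"

definition Bf where "Bf = (SOME B. \<forall>x. \<bar>f x\<bar> \<le> B)"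

lemma f_le_Bf: "\<bar>f x\<bar> \<le> Bf"
proof -
  obtain C where C: "\<And>x. \<bar>f x\<bar> * (1 + norm x) ^ 4 \<le> C" using sw_decay[OF S] by blast
  have "\<bar>f x\<bar> \<le> C" for x
  proof -
    have "1 \<le> (1 + norm x) ^ 4" by (rule one_le_power) simp
    then have "\<bar>f x\<bar> * 1 \<le> \<bar>f x\<bar> * (1 + norm x) ^ 4" by (intro mult_left_mono) auto
    then show ?thesis using C[of x] by simp
  qed
  then have "\<exists>B. \<forall>x. \<bar>f x\<bar> \<le> B" by blast
  then show ?thesis unfolding Bf_def by (rule someI_ex[where P = "\<lambda>B. \<forall>x. \<bar>f x\<bar> \<le> B", THEN spec])
qed

lemma Bf_nonneg: "Bf \<ge> 0" using f_le_Bf[of 0] by simp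

lemma h_le: "\<bar>h r p v\<bar> \<le> Bf" unfolding h_def by (rule f_le_Bf)
lemma G_le: "\<bar>G r k \<omega>\<bar> \<le> Bf" unfolding G_def by (rule h_le)

lemma f_cont: "continuous_on UNIV f"
  using sw_cont[OF S] by (simp add: continuous_at_imp_continuous_on)

lemma h_meas[measurable]: "h r p \<in> borel_measurable borel"
proof -
  have "continuous_on UNIV (h r p)" unfolding h_def
    by (intro continuous_on_compose2[OF f_cont] continuous_intros) auto
  then show ?thesis by (rule borel_measurable_continuous_onI)
qed

lemma G_meas[measurable]: "G r k \<in> borel_measurable M"
  unfolding G_def by measurable

lemma transfer_nn:
  assumes [measurable]: "g \<in> borel_measurable borel"
  shows "(\<integral>\<^sup>+\<omega>. g (\<xi> p \<omega>) \<partial>M) = (\<integral>\<^sup>+\<omega>. g (\<xi> (0, 0) \<omega>) \<partial>M)"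
proof -
  have "(\<integral>\<^sup>+\<omega>. g (\<xi> p \<omega>) \<partial>M) = (\<integral>\<^sup>+v. g v \<partial>distr M borel (\<xi> p))"
    by (simp add: nn_integral_distr)
  also have "\<dots> = (\<integral>\<^sup>+v. g v \<partial>distr M borel (\<xi> (0, 0)))" by (simp add: idist[of p])
  also have "\<dots> = (\<integral>\<^sup>+\<omega>. g (\<xi> (0, 0) \<omega>) \<partial>M)" by (simp add: nn_integral_distr)
  finally show ?thesis .
qed

lemma transfer_int:
  fixes g :: "real^2 \<Rightarrow> real"
  assumes [measurable]: "g \<in> borel_measurable borel"
  shows "(\<integral>\<omega>. g (\<xi> p \<omega>) \<partial>M) = (\<integral>\<omega>. g (\<xi> (0, 0) \<omega>) \<partial>M)"
proof -
  have "(\<integral>\<omega>. g (\<xi> p \<omega>) \<partial>M) = (\<integral>v. g v \<partial>distr M borel (\<xi> p))"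
    by (simp add: integral_distr)
  also have "\<dots> = (\<integral>v. g v \<partial>distr M borel (\<xi> (0, 0)))" by (simp add: idist[of p])
  also have "\<dots> = (\<integral>\<omega>. g (\<xi> (0, 0) \<omega>) \<partial>M)" by (simp add: integral_distr)
  finally show ?thesis .
qed

lemma sum_h_bound: "\<exists>C. \<forall>r>0. \<forall>v. (\<Sum>k. ennreal \<bar>h r (en k) v\<bar>) \<le> ennreal (C * (1 + r)^2)"
proof -
  obtain C where C: "\<And>r y P. r > 0 \<Longrightarrow> finite P \<Longrightarrow> (\<Sum>p\<in>P. \<bar>f ((1 / r) *\<^sub>R (lat p + y))\<bar>) \<le> C * (1 + r)^2"
    using f_sum_bound[OF S] by blast
  have "(\<Sum>k. ennreal \<bar>h r (en k) v\<bar>) \<le> ennreal (C * (1 + r)^2)" if "r > 0" for r v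
  proof (rule en_sum_le)
    show "(\<Sum>p\<in>P. \<bar>h r p v\<bar>) \<le> C * (1 + r)^2" if "finite P" for P
      unfolding h_def by (rule C) fact+
  qed simp
  then show ?thesis by blast
qed

lemma E_sum_abs: assumes r: "r > 0" shows "(\<integral>\<^sup>+\<omega>. (\<Sum>k. ennreal \<bar>G r k \<omega>\<bar>) \<partial>M) < \<infinity>"
proof -
  obtain C where C: "\<And>v. (\<Sum>k. ennreal \<bar>h r (en k) v\<bar>) \<le> ennreal (C * (1 + r)^2)"
    using sum_h_bound r by blast
  have "(\<integral>\<^sup>+\<omega>. (\<Sum>k. ennreal \<bar>G r k \<omega>\<bar>) \<partial>M) = (\<Sum>k. \<integral>\<^sup>+\<omega>. ennreal \<bar>G r k \<omega>\<bar> \<partial>M)"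
    by (rule nn_integral_suminf) measurable
  also have "\<dots> = (\<Sum>k. \<integral>\<^sup>+\<omega>. ennreal \<bar>h r (en k) (\<xi> (0, 0) \<omega>)\<bar> \<partial>M)"
    unfolding G_def by (intro suminf_cong transfer_nn[of "\<lambda>v. ennreal \<bar>h r (en _) v\<bar>"]) measurable
  also have "\<dots> = (\<integral>\<^sup>+\<omega>. (\<Sum>k. ennreal \<bar>h r (en k) (\<xi> (0, 0) \<omega>)\<bar>) \<partial>M)"
    by (rule nn_integral_suminf[symmetric]) measurable
  also have "\<dots> \<le> (\<integral>\<^sup>+\<omega>. ennreal (C * (1 + r)^2) \<partial>M)"
    by (intro nn_integral_mono C)
  also have "\<dots> = ennreal (C * (1 + r)^2)" by (simp add: emeasure_space_1)
  also have "\<dots> < \<infinity>" by simp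
  finally show ?thesis .
qed

lemma AE_summable: assumes r: "r > 0" shows "AE \<omega> in M. summable (\<lambda>k. \<bar>G r k \<omega>\<bar>)"
proof -
  have "AE \<omega> in M. (\<Sum>k. ennreal \<bar>G r k \<omega>\<bar>) \<noteq> \<infinity>"
  proof (rule nn_integral_PInf_AE)
    show "(\<lambda>\<omega>. \<Sum>k. ennreal \<bar>G r k \<omega>\<bar>) \<in> borel_measurable M"
      by (intro borel_measurable_suminf_order) measurable
  qed (use E_sum_abs[OF r] in simp)
  then show ?thesis by eventually_elim (rule summable_suminf_not_top, auto)
qed

lemma linstat_eq: "linstat f \<xi> r \<omega> = (if summable (\<lambda>k. \<bar>G r k \<omega>\<bar>) then (\<Sum>k. G r k \<omega>) else 0)"
  unfolding linstat_def infsum_en G_def h_def ..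

lemma summable_iff_enn: "summable (\<lambda>k. \<bar>G r k \<omega>\<bar>) \<longleftrightarrow> (\<Sum>k. ennreal \<bar>G r k \<omega>\<bar>) < \<top>"
proof
  assume "summable (\<lambda>k. \<bar>G r k \<omega>\<bar>)"
  then have "(\<Sum>k. ennreal \<bar>G r k \<omega>\<bar>) \<noteq> \<top>" by (intro ennreal_suminf_neq_top) auto
  then show "(\<Sum>k. ennreal \<bar>G r k \<omega>\<bar>) < \<top>" by (simp add: top.not_eq_extremum)
next
  assume "(\<Sum>k. ennreal \<bar>G r k \<omega>\<bar>) < \<top>"
  then show "summable (\<lambda>k. \<bar>G r k \<omega>\<bar>)" by (intro summable_suminf_not_top) auto
qed

lemma linstat_meas[measurable]: "linstat f \<xi> r \<in> borel_measurable M"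
proof -
  have "linstat f \<xi> r = (\<lambda>\<omega>. if (\<Sum>k. ennreal \<bar>G r k \<omega>\<bar>) < \<top> then (\<Sum>k. G r k \<omega>) else 0)"
    by (simp add: fun_eq_iff linstat_eq summable_iff_enn)
  also have "\<dots> \<in> borel_measurable M" by measurable
  finally show ?thesis .
qed

definition W :: "real \<Rightarrow> 'a \<Rightarrow> real" where "W r \<omega> = (\<Sum>k. \<bar>G r k \<omega>\<bar>)"

lemma W_meas[measurable]: "W r \<in> borel_measurable M" unfolding W_def by measurable

lemma W_integrable: assumes r: "r > 0" shows "integrable M (W r)"
proof (rule integrableI_bounded)
  have "AE \<omega> in M. ennreal (norm (W r \<omega>)) = (\<Sum>k. ennreal \<bar>G r k \<omega>\<bar>)"
    using AE_summable[OF r]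
  proof eventually_elim
    case (elim \<omega>)
    then have "W r \<omega> \<ge> 0" unfolding W_def by (intro suminf_nonneg) auto
    then show ?case using elim unfolding W_def by (simp add: suminf_ennreal2)
  qed
  then have "(\<integral>\<^sup>+\<omega>. ennreal (norm (W r \<omega>)) \<partial>M) = (\<integral>\<^sup>+\<omega>. (\<Sum>k. ennreal \<bar>G r k \<omega>\<bar>) \<partial>M)"
    by (rule nn_integral_cong_AE)
  then show "(\<integral>\<^sup>+\<omega>. ennreal (norm (W r \<omega>)) \<partial>M) < \<infinity>" using E_sum_abs[OF r] by simp
qed measurable

lemma linstat_le_W: assumes r: "r > 0" shows "AE \<omega> in M. norm (linstat f \<xi> r \<omega>) \<le> W r \<omega>"
  using AE_summable[OF r] by eventually_elim (simp add: linstat_eq W_def summable_rabs)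

lemma linstat_integrable: assumes r: "r > 0" shows "integrable M (linstat f \<xi> r)"
  by (rule Bochner_Integration.integrable_bound[OF W_integrable[OF r]]) (use linstat_le_W[OF r] in auto)

end

lemma enn_int_le:
  fixes \<phi> :: "'a \<Rightarrow> real"
  assumes "integrable M \<phi>"
  shows "ennreal (integral\<^sup>L M \<phi>) \<le> (\<integral>\<^sup>+x. ennreal (\<phi> x) \<partial>M)"
proof -
  have i: "integrable M (\<lambda>x. max (\<phi> x) 0)" using assms by auto
  have "integral\<^sup>L M \<phi> \<le> integral\<^sup>L M (\<lambda>x. max (\<phi> x) 0)"
    using assms i by (intro integral_mono) auto
  then have "ennreal (integral\<^sup>L M \<phi>) \<le> ennreal (integral\<^sup>L M (\<lambda>x. max (\<phi> x) 0))" by (rule ennreal_leI)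
  also have "\<dots> = (\<integral>\<^sup>+x. ennreal (max (\<phi> x) 0) \<partial>M)"
    using i by (intro nn_integral_eq_integral[symmetric]) auto
  also have "\<dots> = (\<integral>\<^sup>+x. ennreal (\<phi> x) \<partial>M)"
    by (intro nn_integral_cong) (auto simp: max_def ennreal_neg)
  finally show ?thesis .
qed

context LS
begin

definition m :: "real \<Rightarrow> nat \<Rightarrow> real" where "m r k = (\<integral>\<omega>. G r k \<omega> \<partial>M)"
definition X :: "real \<Rightarrow> nat \<Rightarrow> 'a \<Rightarrow> real" where "X r k \<omega> = G r k \<omega> - m r k"
definition V :: "real \<Rightarrow> nat \<Rightarrow> real" where "V r k = (\<integral>\<omega>. (X r k \<omega>)^2 \<partial>M)"
definition U :: "real \<Rightarrow> nat \<Rightarrow> 'a \<Rightarrow> real" where "U r n \<omega> = (\<Sum>k<n. X r k \<omega>)"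

lemma X_meas[measurable]: "X r k \<in> borel_measurable M" unfolding X_def by measurable
lemma U_meas[measurable]: "U r n \<in> borel_measurable M" unfolding U_def by measurable

lemma G_int[simp]: "integrable M (G r k)"
  by (rule integrable_const_bound[where B = Bf]) (auto simp: G_le)

lemma m_le: "\<bar>m r k\<bar> \<le> Bf"
proof -
  have "\<bar>m r k\<bar> \<le> (\<integral>\<omega>. \<bar>G r k \<omega>\<bar> \<partial>M)" unfolding m_def by (rule integral_abs_bound)
  also have "\<dots> \<le> (\<integral>\<omega>. Bf \<partial>M)" by (intro integral_mono) (auto simp: G_le)
  finally show ?thesis by (simp add: prob_space)
qed

lemma X_le: "\<bar>X r k \<omega>\<bar> \<le> 2 * Bf"
  unfolding X_def using G_le[of r k \<omega>] m_le[of r k] by linarith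

lemma bounded_int:
  fixes g :: "'a \<Rightarrow> real"
  assumes [measurable]: "g \<in> borel_measurable M" and "\<And>\<omega>. \<bar>g \<omega>\<bar> \<le> B"
  shows "integrable M g"
  by (rule integrable_const_bound[where B = B]) (auto simp: assms(2))

lemma X_int[simp]: "integrable M (X r k)" by (rule bounded_int[OF X_meas X_le])

lemma XX_int[simp]: "integrable M (\<lambda>\<omega>. X r j \<omega> * X r k \<omega>)"
proof (rule bounded_int)
  show "\<bar>X r j \<omega> * X r k \<omega>\<bar> \<le> (2 * Bf) * (2 * Bf)" for \<omega>
    unfolding abs_mult using Bf_nonneg by (intro mult_mono X_le) auto
qed measurable

lemma X_mean: "(\<integral>\<omega>. X r k \<omega> \<partial>M) = 0"
  unfolding X_def m_def by (simp add: prob_space)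

lemma cross: assumes "j \<noteq> k" shows "(\<integral>\<omega>. X r j \<omega> * X r k \<omega> \<partial>M) = 0"
proof -
  have "en j \<noteq> en k" using assms inj_en by (auto simp: inj_def)
  then have iv: "indep_var borel (\<xi> (en j)) borel (\<xi> (en k))" by (rule indep_pair[OF ind])
  have mj: "(\<lambda>v. h r (en j) v - m r j) \<in> borel_measurable borel" by measurable
  have mk: "(\<lambda>v. h r (en k) v - m r k) \<in> borel_measurable borel" by measurable
  have "indep_var borel ((\<lambda>v. h r (en j) v - m r j) \<circ> \<xi> (en j)) borel ((\<lambda>v. h r (en k) v - m r k) \<circ> \<xi> (en k))"
    by (rule indep_var_compose[OF iv mj mk])
  moreover have "X r i = (\<lambda>x. h r (en i) (\<xi> (en i) x) - m r i)" for i by (simp add: fun_eq_iff X_def G_def)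
  ultimately have "indep_var borel (X r j) borel (X r k)" by (simp add: comp_def)
  then have "(\<integral>\<omega>. X r j \<omega> * X r k \<omega> \<partial>M) = (\<integral>\<omega>. X r j \<omega> \<partial>M) * (\<integral>\<omega>. X r k \<omega> \<partial>M)"
    by (intro indep_var_lebesgue_integral) auto
  then show ?thesis by (simp add: X_mean)
qed

lemma XX_int_eq: "(\<integral>\<omega>. X r j \<omega> * X r k \<omega> \<partial>M) = (if j = k then V r k else 0)"
  using cross[of j k r] by (simp add: V_def power2_eq_square)

lemma UU: "(\<integral>\<omega>. U r n \<omega> * U r n' \<omega> \<partial>M) = (\<Sum>j<n. if j < n' then V r j else 0)"
proof -
  have "(\<lambda>\<omega>. U r n \<omega> * U r n' \<omega>) = (\<lambda>\<omega>. \<Sum>j<n. \<Sum>k<n'. X r j \<omega> * X r k \<omega>)"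
    unfolding U_def by (simp add: sum_product)
  then have "(\<integral>\<omega>. U r n \<omega> * U r n' \<omega> \<partial>M) = (\<Sum>j<n. \<Sum>k<n'. (\<integral>\<omega>. X r j \<omega> * X r k \<omega> \<partial>M))"
    by (simp add: integral_sum)
  also have "\<dots> = (\<Sum>j<n. \<Sum>k<n'. if j = k then V r k else 0)" by (simp add: XX_int_eq)
  also have "\<dots> = (\<Sum>j<n. if j < n' then V r j else 0)"
    by (intro sum.cong refl) (simp add: sum.delta)
  finally show ?thesis .
qed

lemma UU_ge: "n \<le> n' \<Longrightarrow> (\<integral>\<omega>. U r n \<omega> * U r n' \<omega> \<partial>M) = (\<Sum>j<n. V r j)"
  unfolding UU by (intro sum.cong) auto

lemma U2: "(\<integral>\<omega>. (U r n \<omega>)^2 \<partial>M) = (\<Sum>j<n. V r j)"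
  using UU_ge[of n n r] by (simp add: power2_eq_square)

lemma U_le: "\<bar>U r n \<omega>\<bar> \<le> real n * (2 * Bf)"
proof -
  have "\<bar>U r n \<omega>\<bar> \<le> (\<Sum>k<n. \<bar>X r k \<omega>\<bar>)" unfolding U_def by (rule sum_abs)
  also have "\<dots> \<le> (\<Sum>k<n. 2 * Bf)" by (intro sum_mono X_le)
  finally show ?thesis by simp
qed

lemma U_int[simp]: "integrable M (U r n)" by (rule bounded_int[OF U_meas U_le])

lemma U2_int[simp]: "integrable M (\<lambda>\<omega>. (U r n \<omega>)^2)"
proof (rule bounded_int)
  show "\<bar>(U r n \<omega>)^2\<bar> \<le> (real n * (2 * Bf))^2" for \<omega>
    using U_le[of r n \<omega>] by (metis abs_ge_zero order_trans power2_abs power_mono abs_power2)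
qed measurable

lemma V_nonneg: "V r k \<ge> 0" unfolding V_def by simp

end

context LS
begin

definition Sn :: "real \<Rightarrow> nat \<Rightarrow> 'a \<Rightarrow> real" where "Sn r n \<omega> = (\<Sum>k<n. G r k \<omega>)"

lemma Sn_meas[measurable]: "Sn r n \<in> borel_measurable M" unfolding Sn_def by measurable
lemma Sn_int[simp]: "integrable M (Sn r n)" unfolding Sn_def by auto
lemma Sn_int_eq: "(\<integral>\<omega>. Sn r n \<omega> \<partial>M) = (\<Sum>k<n. m r k)"
  unfolding Sn_def m_def by (simp add: integral_sum)

lemma U_Sn: "U r n \<omega> = Sn r n \<omega> - (\<Sum>k<n. m r k)"
  unfolding U_def Sn_def X_def by (simp add: sum_subtractf)

context fixes r :: real assumes r: "r > 0"
begin

lemma Sn_le_W: "AE \<omega> in M. norm (Sn r n \<omega>) \<le> W r \<omega>"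
  using AE_summable[OF r]
proof eventually_elim
  case (elim \<omega>)
  have "\<bar>Sn r n \<omega>\<bar> \<le> (\<Sum>k<n. \<bar>G r k \<omega>\<bar>)" unfolding Sn_def by (rule sum_abs)
  also have "\<dots> \<le> W r \<omega>" unfolding W_def using elim by (intro sum_le_suminf) auto
  finally show ?case by simp
qed

lemma Sn_lim: "AE \<omega> in M. (\<lambda>n. Sn r n \<omega>) \<longlonglongrightarrow> linstat f \<xi> r \<omega>"
  using AE_summable[OF r]
proof eventually_elim
  case (elim \<omega>)
  then have "summable (\<lambda>k. G r k \<omega>)" by (rule summable_rabs_cancel)
  then show ?case using elim unfolding Sn_def linstat_eq by (simp add: summable_LIMSEQ)
qed

lemma m_lim: "(\<lambda>n. \<Sum>k<n. m r k) \<longlonglongrightarrow> (\<integral>\<omega>. linstat f \<xi> r \<omega> \<partial>M)"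
proof -
  have "(\<lambda>n. \<integral>\<omega>. Sn r n \<omega> \<partial>M) \<longlonglongrightarrow> (\<integral>\<omega>. linstat f \<xi> r \<omega> \<partial>M)"
    by (rule integral_dominated_convergence[OF linstat_meas Sn_meas W_integrable[OF r] Sn_lim Sn_le_W])
  then show ?thesis by (simp add: Sn_int_eq)
qed

lemma U_lim: "AE \<omega> in M. (\<lambda>n. U r n \<omega>) \<longlonglongrightarrow> linstat f \<xi> r \<omega> - (\<integral>\<omega>. linstat f \<xi> r \<omega> \<partial>M)"
  using Sn_lim
proof eventually_elim
  case (elim \<omega>)
  show ?case unfolding U_Sn by (intro tendsto_diff elim m_lim)
qed

lemma var_upper: "evariance M (linstat f \<xi> r) \<le> (\<Sum>k. ennreal (V r k))"
proof -
  let ?T = "linstat f \<xi> r" let ?E = "\<integral>\<omega>. linstat f \<xi> r \<omega> \<partial>M"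
  have "AE \<omega> in M. ennreal ((?T \<omega> - ?E)^2) = liminf (\<lambda>n. ennreal ((U r n \<omega>)^2))"
    using U_lim
  proof eventually_elim
    case (elim \<omega>)
    then have "(\<lambda>n. ennreal ((U r n \<omega>)^2)) \<longlonglongrightarrow> ennreal ((?T \<omega> - ?E)^2)"
      by (intro tendsto_ennrealI tendsto_power)
    then show ?case by (intro lim_imp_Liminf[symmetric]) auto
  qed
  then have "evariance M ?T = (\<integral>\<^sup>+\<omega>. liminf (\<lambda>n. ennreal ((U r n \<omega>)^2)) \<partial>M)"
    unfolding evariance_def by (rule nn_integral_cong_AE)
  also have "\<dots> \<le> liminf (\<lambda>n. \<integral>\<^sup>+\<omega>. ennreal ((U r n \<omega>)^2) \<partial>M)"
    by (rule nn_integral_liminf) measurable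
  also have "(\<lambda>n. \<integral>\<^sup>+\<omega>. ennreal ((U r n \<omega>)^2) \<partial>M) = (\<lambda>n. ennreal (\<Sum>k<n. V r k))"
    by (intro ext) (simp add: nn_integral_eq_integral U2)
  also have "liminf (\<lambda>n. ennreal (\<Sum>k<n. V r k)) \<le> limsup (\<lambda>n. ennreal (\<Sum>k<n. V r k))"
    by (rule Liminf_le_Limsup) simp
  also have "\<dots> \<le> (\<Sum>k. ennreal (V r k))"
  proof (rule Limsup_bounded, rule always_eventually, rule allI)
    fix n
    have "ennreal (\<Sum>k<n. V r k) = (\<Sum>k<n. ennreal (V r k))" using V_nonneg by simp
    also have "\<dots> \<le> (\<Sum>k. ennreal (V r k))" by (rule sum_le_suminf) auto
    finally show "ennreal (\<Sum>k<n. V r k) \<le> (\<Sum>k. ennreal (V r k))" .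
  qed
  finally show ?thesis .
qed

lemma U_le_W: "AE \<omega> in M. norm (U r n' \<omega>) \<le> W r \<omega> + (\<integral>\<omega>. W r \<omega> \<partial>M)"
proof -
  have "\<bar>\<Sum>k<n'. m r k\<bar> \<le> (\<integral>\<omega>. W r \<omega> \<partial>M)"
  proof -
    have "\<bar>\<Sum>k<n'. m r k\<bar> = \<bar>\<integral>\<omega>. Sn r n' \<omega> \<partial>M\<bar>" by (simp add: Sn_int_eq)
    also have "\<dots> \<le> (\<integral>\<omega>. \<bar>Sn r n' \<omega>\<bar> \<partial>M)" by (rule integral_abs_bound)
    also have "\<dots> \<le> (\<integral>\<omega>. W r \<omega> \<partial>M)"
      using Sn_le_W[of n'] by (intro integral_mono_AE W_integrable r) auto
    finally show ?thesis .
  qed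
  note c = this
  show ?thesis using Sn_le_W[of n']
  proof eventually_elim
    case (elim \<omega>)
    have "norm (U r n' \<omega>) \<le> \<bar>Sn r n' \<omega>\<bar> + \<bar>\<Sum>k<n'. m r k\<bar>"
      unfolding U_Sn real_norm_def by (rule abs_triangle_ineq4)
    then show ?case using elim c by simp
  qed
qed

lemma var_lower: "ennreal (\<Sum>k<n. V r k) \<le> evariance M (linstat f \<xi> r)"
proof -
  let ?T = "linstat f \<xi> r" let ?E = "\<integral>\<omega>. linstat f \<xi> r \<omega> \<partial>M"
  define D where "D \<omega> = ?T \<omega> - ?E" for \<omega>
  have D_meas[measurable]: "D \<in> borel_measurable M" unfolding D_def by measurable
  define w where "w \<omega> = (real n * (2 * Bf)) * (W r \<omega> + (\<integral>\<omega>. W r \<omega> \<partial>M))" for \<omega>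
  have w_int: "integrable M w" unfolding w_def using W_integrable[OF r] by auto
  have lim: "AE \<omega> in M. (\<lambda>n'. U r n \<omega> * U r n' \<omega>) \<longlonglongrightarrow> U r n \<omega> * D \<omega>"
    using U_lim by eventually_elim (unfold D_def, intro tendsto_mult tendsto_const)
  have bnd: "AE \<omega> in M. norm (U r n \<omega> * U r n' \<omega>) \<le> w \<omega>" for n'
    using U_le_W[of n']
  proof eventually_elim
    case (elim \<omega>)
    show ?case unfolding w_def norm_mult using U_le[of r n \<omega>] elim Bf_nonneg
      by (intro mult_mono) auto
  qed
  have UD_int: "integrable M (\<lambda>\<omega>. U r n \<omega> * D \<omega>)"
    by (rule integrable_dominated_convergence[OF _ _ w_int lim bnd]) measurable
  have "(\<lambda>n'. \<integral>\<omega>. U r n \<omega> * U r n' \<omega> \<partial>M) \<longlonglongrightarrow> (\<integral>\<omega>. U r n \<omega> * D \<omega> \<partial>M)"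
    by (rule integral_dominated_convergence[OF _ _ w_int lim bnd]) measurable
  moreover have "eventually (\<lambda>n'. (\<integral>\<omega>. U r n \<omega> * U r n' \<omega> \<partial>M) = (\<Sum>k<n. V r k)) sequentially"
    using UU_ge by (auto simp: eventually_sequentially)
  ultimately have "(\<lambda>n'. \<Sum>k<n. V r k) \<longlonglongrightarrow> (\<integral>\<omega>. U r n \<omega> * D \<omega> \<partial>M)"
    by (rule Lim_transform_eventually)
  then have UD: "(\<integral>\<omega>. U r n \<omega> * D \<omega> \<partial>M) = (\<Sum>k<n. V r k)"
    using LIMSEQ_unique tendsto_const by blast
  have "ennreal (\<Sum>k<n. V r k) = ennreal (\<integral>\<omega>. 2 * (U r n \<omega> * D \<omega>) - (U r n \<omega>)^2 \<partial>M)"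
    using UD_int by (simp add: UD U2)
  also have "\<dots> \<le> (\<integral>\<^sup>+\<omega>. ennreal (2 * (U r n \<omega> * D \<omega>) - (U r n \<omega>)^2) \<partial>M)"
    using UD_int by (intro enn_int_le) auto
  also have "\<dots> \<le> (\<integral>\<^sup>+\<omega>. ennreal ((D \<omega>)^2) \<partial>M)"
  proof (intro nn_integral_mono ennreal_leI)
    fix \<omega>
    have "0 \<le> (D \<omega> - U r n \<omega>)^2" by simp
    then show "2 * (U r n \<omega> * D \<omega>) - (U r n \<omega>)^2 \<le> (D \<omega>)^2"
      by (simp add: power2_eq_square algebra_simps)
  qed
  also have "\<dots> = evariance M ?T" unfolding evariance_def D_def ..
  finally show ?thesis .
qed

lemma var_eq: "evariance M (linstat f \<xi> r) = (\<Sum>k. ennreal (V r k))"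
proof (rule antisym[OF var_upper])
  show "(\<Sum>k. ennreal (V r k)) \<le> evariance M (linstat f \<xi> r)"
    unfolding suminf_eq_SUP
  proof (rule SUP_least)
    fix n
    have "(\<Sum>k<n. ennreal (V r k)) = ennreal (\<Sum>k<n. V r k)" using V_nonneg by simp
    then show "(\<Sum>k<n. ennreal (V r k)) \<le> evariance M (linstat f \<xi> r)" using var_lower by simp
  qed
qed

end
end

lemma (in prob_space) var_le_const:
  fixes Y :: "'a \<Rightarrow> real"
  assumes [measurable]: "Y \<in> borel_measurable M" and b: "\<And>\<omega>. \<bar>Y \<omega>\<bar> \<le> B"
  shows "(\<integral>\<omega>. (Y \<omega> - (\<integral>\<omega>. Y \<omega> \<partial>M))^2 \<partial>M) \<le> (\<integral>\<omega>. (Y \<omega> - c)^2 \<partial>M)"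
proof -
  have iY: "integrable M Y" by (rule integrable_const_bound[where B = B]) (auto simp: b)
  have iY2: "integrable M (\<lambda>\<omega>. (Y \<omega>)^2)"
  proof (rule integrable_const_bound[where B = "B^2"])
    show "AE \<omega> in M. norm ((Y \<omega>)^2) \<le> B^2"
      using b by (auto intro!: AE_I2) (metis abs_ge_zero order_trans power2_abs power_mono)
  qed measurable
  define E where "E = (\<integral>\<omega>. Y \<omega> \<partial>M)"
  have e: "(\<integral>\<omega>. (Y \<omega> - a)^2 \<partial>M) = (\<integral>\<omega>. (Y \<omega>)^2 \<partial>M) - 2 * a * E + a^2" for a
  proof -
    have "(\<lambda>\<omega>. (Y \<omega> - a)^2) = (\<lambda>\<omega>. (Y \<omega>)^2 - (2 * a) * Y \<omega> + a^2)"
      by (simp add: fun_eq_iff power2_eq_square algebra_simps)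
    then show ?thesis using iY iY2 by (simp add: E_def prob_space)
  qed
  have "(\<integral>\<omega>. (Y \<omega> - c)^2 \<partial>M) - (\<integral>\<omega>. (Y \<omega> - E)^2 \<partial>M) = (E - c)^2"
    unfolding e by (simp add: power2_eq_square algebra_simps)
  then show ?thesis unfolding E_def[symmetric] by (smt (verit) zero_le_power2)
qed

context LS
begin

definition mh :: "real \<Rightarrow> int \<times> int \<Rightarrow> real" where "mh r p = (\<integral>\<omega>. h r p (\<xi> (0, 0) \<omega>) \<partial>M)"
definition Vh :: "real \<Rightarrow> int \<times> int \<Rightarrow> real" where
  "Vh r p = (\<integral>\<omega>. (h r p (\<xi> (0, 0) \<omega>) - mh r p)^2 \<partial>M)"

lemma V_Vh: "V r k = Vh r (en k)"
proof -
  have m: "m r k = mh r (en k)" unfolding m_def mh_def G_def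
    by (rule transfer_int) measurable
  show ?thesis unfolding V_def Vh_def X_def m G_def
    by (rule transfer_int[of "\<lambda>v. (h r (en k) v - mh r (en k))^2"]) measurable
qed

lemma Vh_upper: "Vh r p \<le> (\<integral>\<omega>. (h r p (\<xi> (0, 0) \<omega>) - h r p 0)^2 \<partial>M)"
  unfolding Vh_def mh_def by (rule var_le_const[where B = Bf]) (auto simp: h_le)

lemma h_xi_int[simp]: "integrable M (\<lambda>\<omega>. h r p (\<xi> q \<omega>))"
  by (rule bounded_int[where B = Bf]) (auto simp: h_le)

lemma h_xi2_int[simp]: "integrable M (\<lambda>\<omega>. (h r p (\<xi> q \<omega>))^2)"
  by (rule bounded_int[where B = "Bf^2"]) (auto, metis abs_ge_zero order_trans power2_abs power_mono h_le)

lemma Vh_pair: "2 * Vh r p = (\<integral>\<omega>. (h r p (\<xi> (0, 0) \<omega>) - h r p (\<xi> (1, 0) \<omega>))^2 \<partial>M)"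
proof -
  let ?a = "\<lambda>\<omega>. h r p (\<xi> (0, 0) \<omega>)" and ?b = "\<lambda>\<omega>. h r p (\<xi> (1, 0) \<omega>)"
  have iv: "indep_var borel (\<xi> (0, 0)) borel (\<xi> (1, 0))" by (rule indep_pair[OF ind]) simp
  have "indep_var borel (h r p \<circ> \<xi> (0, 0)) borel (h r p \<circ> \<xi> (1, 0))"
    by (rule indep_var_compose[OF iv]) measurable
  then have ab: "(\<integral>\<omega>. ?a \<omega> * ?b \<omega> \<partial>M) = (\<integral>\<omega>. ?a \<omega> \<partial>M) * (\<integral>\<omega>. ?b \<omega> \<partial>M)"
    by (intro indep_var_lebesgue_integral) (auto simp: comp_def)
  have abi: "integrable M (\<lambda>\<omega>. ?a \<omega> * ?b \<omega>)"
    by (rule bounded_int[where B = "Bf * Bf"]) (auto simp: abs_mult intro!: mult_mono h_le Bf_nonneg)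
  have b1: "(\<integral>\<omega>. ?b \<omega> \<partial>M) = (\<integral>\<omega>. ?a \<omega> \<partial>M)" by (rule transfer_int) measurable
  have b2: "(\<integral>\<omega>. (?b \<omega>)^2 \<partial>M) = (\<integral>\<omega>. (?a \<omega>)^2 \<partial>M)"
    by (rule transfer_int[of "\<lambda>v. (h r p v)^2"]) measurable
  have "(\<lambda>\<omega>. (?a \<omega> - ?b \<omega>)^2) = (\<lambda>\<omega>. (?a \<omega>)^2 + (?b \<omega>)^2 - 2 * (?a \<omega> * ?b \<omega>))"
    by (simp add: fun_eq_iff power2_eq_square algebra_simps)
  then have "(\<integral>\<omega>. (?a \<omega> - ?b \<omega>)^2 \<partial>M) = (\<integral>\<omega>. (?a \<omega>)^2 \<partial>M) + (\<integral>\<omega>. (?b \<omega>)^2 \<partial>M) - 2 * (\<integral>\<omega>. ?a \<omega> * ?b \<omega> \<partial>M)"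
    using abi by (simp add: integral_diff integral_add)
  then have r: "(\<integral>\<omega>. (?a \<omega> - ?b \<omega>)^2 \<partial>M) = 2 * ((\<integral>\<omega>. (?a \<omega>)^2 \<partial>M) - (\<integral>\<omega>. ?a \<omega> \<partial>M)^2)"
    unfolding ab b1 b2 by (simp add: power2_eq_square)
  have "(\<lambda>\<omega>. (?a \<omega> - mh r p)^2) = (\<lambda>\<omega>. (?a \<omega>)^2 - 2 * mh r p * ?a \<omega> + (mh r p)^2)"
    by (simp add: fun_eq_iff power2_eq_square algebra_simps)
  then have "Vh r p = (\<integral>\<omega>. (?a \<omega>)^2 \<partial>M) - 2 * mh r p * (\<integral>\<omega>. ?a \<omega> \<partial>M) + (mh r p)^2"
    unfolding Vh_def by (simp add: prob_space integral_diff integral_add)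
  then have "Vh r p = (\<integral>\<omega>. (?a \<omega>)^2 \<partial>M) - (\<integral>\<omega>. ?a \<omega> \<partial>M)^2"
    unfolding mh_def[symmetric] by (simp add: power2_eq_square)
  then show ?thesis using r by simp
qed

end

lemma sq_bound: fixes x B :: real assumes "\<bar>x\<bar> \<le> B" shows "\<bar>x^2\<bar> \<le> B^2"
proof -
  have "\<bar>x^2\<bar> = \<bar>x\<bar>^2" by simp
  also have "\<dots> \<le> B^2" using assms by (intro power_mono) auto
  finally show ?thesis .
qed

context LS
begin

lemma upper_dir:
  assumes mom: "(\<integral>\<^sup>+\<omega>. ennreal ((norm (\<xi> (0, 0) \<omega>))^2) \<partial>M) < \<infinity>"
  shows "\<exists>C::real. \<forall>r>0. evariance M (linstat f \<xi> r) \<le> ennreal C"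
proof -
  obtain K where K: "\<And>r y P. r > 0 \<Longrightarrow> finite P \<Longrightarrow>
     (\<Sum>p\<in>P. (f ((1 / r) *\<^sub>R (lat p + y)) - f ((1 / r) *\<^sub>R lat p))^2) \<le> K * (1 + (norm y)^2)"
    using upper_lattice[OF S] by blast
  have K0: "K \<ge> 0" using K[of 1 "{}" 0] by simp
  have inner: "(\<Sum>k. ennreal ((h r (en k) v - h r (en k) 0)^2)) \<le> ennreal (K * (1 + (norm v)^2))"
    if r: "r > 0" for r v
  proof (rule en_sum_le)
    show "(\<Sum>p\<in>P. (h r p v - h r p 0)^2) \<le> K * (1 + (norm v)^2)" if "finite P" for P
      unfolding h_def using K[OF r that, of v] by simp
  qed simp
  define Q where "Q = (\<integral>\<^sup>+\<omega>. ennreal (K * (1 + (norm (\<xi> (0, 0) \<omega>))^2)) \<partial>M)"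
  have "Q = (\<integral>\<^sup>+\<omega>. ennreal K * (1 + ennreal ((norm (\<xi> (0, 0) \<omega>))^2)) \<partial>M)"
    unfolding Q_def using K0 by (intro nn_integral_cong) (simp add: ennreal_mult ennreal_plus[symmetric])
  also have "\<dots> = ennreal K * (\<integral>\<^sup>+\<omega>. 1 + ennreal ((norm (\<xi> (0, 0) \<omega>))^2) \<partial>M)"
    by (rule nn_integral_cmult) measurable
  also have "\<dots> = ennreal K * (1 + (\<integral>\<^sup>+\<omega>. ennreal ((norm (\<xi> (0, 0) \<omega>))^2) \<partial>M))"
    by (subst nn_integral_add) (auto simp: emeasure_space_1)
  finally have Qfin: "Q < \<infinity>" using mom by (simp add: ennreal_mult_less_top)
  have "evariance M (linstat f \<xi> r) \<le> Q" if r: "r > 0" for r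
  proof -
    have "evariance M (linstat f \<xi> r) = (\<Sum>k. ennreal (Vh r (en k)))" by (simp add: var_eq[OF r] V_Vh)
    also have "\<dots> \<le> (\<Sum>k. ennreal (\<integral>\<omega>. (h r (en k) (\<xi> (0, 0) \<omega>) - h r (en k) 0)^2 \<partial>M))"
      by (intro suminf_le ennreal_leI Vh_upper) auto
    also have "\<dots> = (\<Sum>k. \<integral>\<^sup>+\<omega>. ennreal ((h r (en k) (\<xi> (0, 0) \<omega>) - h r (en k) 0)^2) \<partial>M)"
    proof (intro suminf_cong nn_integral_eq_integral[symmetric])
      show "integrable M (\<lambda>\<omega>. (h r (en k) (\<xi> (0, 0) \<omega>) - h r (en k) 0)^2)" for k
      proof (rule bounded_int[where B = "(2 * Bf)^2"])
        show "\<bar>(h r (en k) (\<xi> (0, 0) \<omega>) - h r (en k) 0)^2\<bar> \<le> (2 * Bf)^2" for \<omega>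
        proof -
          have "\<bar>h r (en k) (\<xi> (0, 0) \<omega>) - h r (en k) 0\<bar> \<le> 2 * Bf"
            using h_le[of r "en k" "\<xi> (0, 0) \<omega>"] h_le[of r "en k" 0] by linarith
          then show ?thesis by (rule sq_bound)
        qed
      qed measurable
    qed auto
    also have "\<dots> = (\<integral>\<^sup>+\<omega>. (\<Sum>k. ennreal ((h r (en k) (\<xi> (0, 0) \<omega>) - h r (en k) 0)^2)) \<partial>M)"
      by (rule nn_integral_suminf[symmetric]) measurable
    also have "\<dots> \<le> Q" unfolding Q_def by (intro nn_integral_mono inner r)
    finally show ?thesis .
  qed
  moreover have "ennreal (enn2real Q) = Q" using Qfin by simp
  ultimately show ?thesis by metis
qed

lemma lower_dir:
  assumes nz: "f a0 \<noteq> 0" and bd: "\<And>r. r > 0 \<Longrightarrow> evariance M (linstat f \<xi> r) \<le> ennreal C"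
  shows "(\<integral>\<^sup>+\<omega>. ennreal ((norm (\<xi> (0, 0) \<omega> - \<xi> (1, 0) \<omega>))^2) \<partial>M) < \<infinity>"
proof -
  obtain c r0 where c: "c > 0" "r0 > 0" and L0: "\<forall>r\<ge>r0. \<forall>y z. \<exists>P. finite P \<and>
     (\<Sum>p\<in>P. (f ((1 / r) *\<^sub>R (lat p + y)) - f ((1 / r) *\<^sub>R (lat p + z)))^2) \<ge> c * min ((norm (y - z))^2) (r^2)"
    using lower_lattice[OF S nz] by blast
  note L = L0[rule_format]
  let ?d = "\<lambda>\<omega>. \<xi> (0, 0) \<omega> - \<xi> (1, 0) \<omega>"
  have inner: "ennreal (c * min ((norm (y - z))^2) (r^2)) \<le> (\<Sum>k. ennreal ((h r (en k) y - h r (en k) z)^2))"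
    if r: "r \<ge> r0" for r y z
  proof -
    obtain P where P: "finite P" "(\<Sum>p\<in>P. (h r p y - h r p z)^2) \<ge> c * min ((norm (y - z))^2) (r^2)"
      using L[OF r, of y z] unfolding h_def by blast
    have "ennreal (c * min ((norm (y - z))^2) (r^2)) \<le> ennreal (\<Sum>p\<in>P. (h r p y - h r p z)^2)"
      using P(2) by (rule ennreal_leI)
    also have "\<dots> \<le> (\<Sum>k. ennreal ((h r (en k) y - h r (en k) z)^2))"
      by (rule en_sum_ge[OF P(1)]) simp
    finally show ?thesis .
  qed
  have bound: "(\<integral>\<^sup>+\<omega>. ennreal (c * min ((norm (?d \<omega>))^2) (r^2)) \<partial>M) \<le> ennreal (2 * C)"
    if r: "r \<ge> r0" for r
  proof -
    have rp: "r > 0" using r c by simp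
    have "(\<integral>\<^sup>+\<omega>. ennreal (c * min ((norm (?d \<omega>))^2) (r^2)) \<partial>M)
        \<le> (\<integral>\<^sup>+\<omega>. (\<Sum>k. ennreal ((h r (en k) (\<xi> (0, 0) \<omega>) - h r (en k) (\<xi> (1, 0) \<omega>))^2)) \<partial>M)"
      by (intro nn_integral_mono inner r)
    also have "\<dots> = (\<Sum>k. \<integral>\<^sup>+\<omega>. ennreal ((h r (en k) (\<xi> (0, 0) \<omega>) - h r (en k) (\<xi> (1, 0) \<omega>))^2) \<partial>M)"
      by (rule nn_integral_suminf) measurable
    also have "\<dots> = (\<Sum>k. ennreal (2 * Vh r (en k)))"
    proof (intro suminf_cong)
      fix k
      have "integrable M (\<lambda>\<omega>. (h r (en k) (\<xi> (0, 0) \<omega>) - h r (en k) (\<xi> (1, 0) \<omega>))^2)"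
      proof (rule bounded_int[where B = "(2 * Bf)^2"])
        show "\<bar>(h r (en k) (\<xi> (0, 0) \<omega>) - h r (en k) (\<xi> (1, 0) \<omega>))^2\<bar> \<le> (2 * Bf)^2" for \<omega>
        proof -
          have "\<bar>h r (en k) (\<xi> (0, 0) \<omega>) - h r (en k) (\<xi> (1, 0) \<omega>)\<bar> \<le> 2 * Bf"
            using h_le[of r "en k" "\<xi> (0, 0) \<omega>"] h_le[of r "en k" "\<xi> (1, 0) \<omega>"] by linarith
          then show ?thesis by (rule sq_bound)
        qed
      qed measurable
      then show "(\<integral>\<^sup>+\<omega>. ennreal ((h r (en k) (\<xi> (0, 0) \<omega>) - h r (en k) (\<xi> (1, 0) \<omega>))^2) \<partial>M) = ennreal (2 * Vh r (en k))"
        by (simp add: nn_integral_eq_integral Vh_pair)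
    qed
    also have "\<dots> = (\<Sum>k. 2 * ennreal (Vh r (en k)))"
    proof (intro suminf_cong)
      fix k
      have "Vh r (en k) \<ge> 0" unfolding Vh_def by simp
      then show "ennreal (2 * Vh r (en k)) = 2 * ennreal (Vh r (en k))"
        using ennreal_mult[of 2 "Vh r (en k)"] by simp
    qed
    also have "\<dots> = 2 * (\<Sum>k. ennreal (Vh r (en k)))" by (rule ennreal_suminf_cmult)
    also have "(\<Sum>k. ennreal (Vh r (en k))) = evariance M (linstat f \<xi> r)" by (simp add: var_eq[OF rp] V_Vh)
    also have "2 * evariance M (linstat f \<xi> r) \<le> 2 * ennreal C" by (intro mult_left_mono bd rp) auto
    also have "\<dots> = ennreal (2 * C)"
      by (cases "C \<ge> 0") (auto simp: ennreal_mult ennreal_neg)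
    finally show ?thesis .
  qed
  define g where "g n \<omega> = ennreal (c * min ((norm (?d \<omega>))^2) ((r0 + real n)^2))" for n \<omega>
  have g_meas[measurable]: "g n \<in> borel_measurable M" for n unfolding g_def by measurable
  have g_inc: "incseq g"
  proof (intro incseq_SucI le_funI)
    fix n \<omega>
    have "(r0 + real n)^2 \<le> (r0 + real (Suc n))^2" using c by (intro power_mono) auto
    then have "min ((norm (?d \<omega>))^2) ((r0 + real n)^2) \<le> min ((norm (?d \<omega>))^2) ((r0 + real (Suc n))^2)"
      by linarith
    then show "g n \<omega> \<le> g (Suc n) \<omega>" unfolding g_def using c
      by (intro ennreal_leI mult_left_mono) auto
  qed
  have g_sup: "(SUP n. g n \<omega>) = ennreal (c * (norm (?d \<omega>))^2)" for \<omega>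
  proof (rule antisym)
    show "(SUP n. g n \<omega>) \<le> ennreal (c * (norm (?d \<omega>))^2)"
      unfolding g_def using c by (intro SUP_least ennreal_leI mult_left_mono) auto
    obtain n :: nat where n: "real n \<ge> norm (?d \<omega>)" using real_arch_simple by blast
    have "norm (?d \<omega>) \<le> r0 + real n" using n c by simp
    then have "(norm (?d \<omega>))^2 \<le> (r0 + real n)^2" by (intro power_mono) auto
    then have "g n \<omega> = ennreal (c * (norm (?d \<omega>))^2)" unfolding g_def by (simp add: min_def)
    then show "ennreal (c * (norm (?d \<omega>))^2) \<le> (SUP n. g n \<omega>)" by (metis SUP_upper UNIV_I)
  qed
  have "(\<integral>\<^sup>+\<omega>. ennreal (c * (norm (?d \<omega>))^2) \<partial>M) = (\<integral>\<^sup>+\<omega>. (SUP n. g n \<omega>) \<partial>M)"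
    by (simp add: g_sup)
  also have "\<dots> = (SUP n. \<integral>\<^sup>+\<omega>. g n \<omega> \<partial>M)"
    by (rule nn_integral_monotone_convergence_SUP[OF g_inc g_meas])
  also have "\<dots> \<le> ennreal (2 * C)"
  proof (rule SUP_least)
    fix n
    have "r0 + real n \<ge> r0" by simp
    then show "(\<integral>\<^sup>+\<omega>. g n \<omega> \<partial>M) \<le> ennreal (2 * C)" unfolding g_def by (rule bound)
  qed
  finally have fin: "(\<integral>\<^sup>+\<omega>. ennreal (c * (norm (?d \<omega>))^2) \<partial>M) < \<infinity>"
    using le_less_trans by fastforce
  have "(\<integral>\<^sup>+\<omega>. ennreal (c * (norm (?d \<omega>))^2) \<partial>M) = ennreal c * (\<integral>\<^sup>+\<omega>. ennreal ((norm (?d \<omega>))^2) \<partial>M)"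
    using c by (subst nn_integral_cmult[symmetric]) (auto simp: ennreal_mult)
  with fin c have "(\<integral>\<^sup>+\<omega>. ennreal ((norm (?d \<omega>))^2) \<partial>M) = 0 \<or> (\<integral>\<^sup>+\<omega>. ennreal ((norm (?d \<omega>))^2) \<partial>M) < \<top>"
    by (simp add: ennreal_mult_less_top top.not_eq_extremum)
  then show ?thesis by auto
qed

end

context LS
begin

lemma moment_from_diff:
  assumes fin0: "(\<integral>\<^sup>+\<omega>. ennreal ((norm (\<xi> (0, 0) \<omega> - \<xi> (1, 0) \<omega>))^2) \<partial>M) < \<infinity>"
  shows "(\<integral>\<^sup>+\<omega>. ennreal ((norm (\<xi> (0, 0) \<omega>))^2) \<partial>M) < \<infinity>"
proof -
  let ?\<mu> = "distr M borel (\<xi> (0, 0))"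
  interpret \<mu>: prob_space ?\<mu> by (rule prob_space_distr) measurable
  have iv: "indep_var borel (\<xi> (0, 0)) borel (\<xi> (1, 0))" by (rule indep_pair[OF ind]) simp
  have joint: "distr M (borel \<Otimes>\<^sub>M borel) (\<lambda>\<omega>. (\<xi> (0, 0) \<omega>, \<xi> (1, 0) \<omega>)) = ?\<mu> \<Otimes>\<^sub>M ?\<mu>"
    using iv unfolding indep_var_distribution_eq idist[of "(1, 0)"] by simp
  define g where "g = (\<lambda>z::(real^2) \<times> (real^2). ennreal ((norm (fst z - snd z))^2))"
  have g_meas[measurable]: "g \<in> borel_measurable (borel \<Otimes>\<^sub>M borel)" unfolding g_def by measurable
  have sets_eq: "sets (?\<mu> \<Otimes>\<^sub>M ?\<mu>) = sets (borel \<Otimes>\<^sub>M borel)"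
    by (intro sets_pair_measure_cong) auto
  have g_meas2: "g \<in> borel_measurable (?\<mu> \<Otimes>\<^sub>M ?\<mu>)"
    using g_meas measurable_cong_sets[OF sets_eq refl] by blast
  have "(\<integral>\<^sup>+\<omega>. ennreal ((norm (\<xi> (0, 0) \<omega> - \<xi> (1, 0) \<omega>))^2) \<partial>M)
      = (\<integral>\<^sup>+\<omega>. g (\<xi> (0, 0) \<omega>, \<xi> (1, 0) \<omega>) \<partial>M)" by (simp add: g_def)
  also have "\<dots> = (\<integral>\<^sup>+z. g z \<partial>distr M (borel \<Otimes>\<^sub>M borel) (\<lambda>\<omega>. (\<xi> (0, 0) \<omega>, \<xi> (1, 0) \<omega>)))"
    by (rule nn_integral_distr[symmetric]) measurable
  also have "\<dots> = (\<integral>\<^sup>+z. g z \<partial>(?\<mu> \<Otimes>\<^sub>M ?\<mu>))" unfolding joint ..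
  also have "\<dots> = (\<integral>\<^sup>+x. \<integral>\<^sup>+y. g (x, y) \<partial>?\<mu> \<partial>?\<mu>)"
    by (rule \<mu>.nn_integral_fst[symmetric, OF g_meas2])
  finally have fin: "(\<integral>\<^sup>+x. \<integral>\<^sup>+y. g (x, y) \<partial>?\<mu> \<partial>?\<mu>) \<noteq> \<infinity>" using fin0 by simp
  have inner_meas: "(\<lambda>x. \<integral>\<^sup>+y. g (x, y) \<partial>?\<mu>) \<in> borel_measurable ?\<mu>"
    by (rule \<mu>.borel_measurable_nn_integral_fst[OF g_meas2])
  have "AE x in ?\<mu>. (\<integral>\<^sup>+y. g (x, y) \<partial>?\<mu>) \<noteq> \<infinity>"
    by (rule nn_integral_PInf_AE[OF inner_meas fin])
  then obtain x0 where x0: "(\<integral>\<^sup>+y. g (x0, y) \<partial>?\<mu>) \<noteq> \<infinity>"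
  proof -
    assume *: "\<And>x0. (\<integral>\<^sup>+y. g (x0, y) \<partial>?\<mu>) \<noteq> \<infinity> \<Longrightarrow> thesis"
    show thesis
    proof (rule ccontr)
      assume "\<not> thesis"
      then have "\<forall>x. (\<integral>\<^sup>+y. g (x, y) \<partial>?\<mu>) = \<infinity>" using * by blast
      with \<open>AE x in ?\<mu>. (\<integral>\<^sup>+y. g (x, y) \<partial>?\<mu>) \<noteq> \<infinity>\<close> have "AE x in ?\<mu>. False" by simp
      then show False by simp
    qed
  qed
  have sp1: "emeasure ?\<mu> UNIV = 1" using \<mu>.emeasure_space_1 by simp
  have pw: "ennreal ((norm y)^2) \<le> 2 * g (x0, y) + ennreal (2 * (norm x0)^2)" for y :: "real^2"
  proof -
    have "norm y \<le> norm (x0 - y) + norm x0"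
      using norm_triangle_ineq4[of x0 "x0 - y"] by (simp add: norm_minus_commute)
    then have "(norm y)^2 \<le> (norm (x0 - y) + norm x0)^2" by (intro power_mono) auto
    also have "\<dots> \<le> 2 * (norm (x0 - y))^2 + 2 * (norm x0)^2"
      using sq_diff_le[of "norm (x0 - y)" "- norm x0"] by simp
    finally have "ennreal ((norm y)^2) \<le> ennreal (2 * (norm (x0 - y))^2 + 2 * (norm x0)^2)" by (rule ennreal_leI)
    also have "\<dots> = 2 * g (x0, y) + ennreal (2 * (norm x0)^2)"
      unfolding g_def by (simp add: ennreal_plus[symmetric] ennreal_mult)
    finally show ?thesis .
  qed
  have "(\<integral>\<^sup>+\<omega>. ennreal ((norm (\<xi> (0, 0) \<omega>))^2) \<partial>M) = (\<integral>\<^sup>+y. ennreal ((norm y)^2) \<partial>?\<mu>)"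
    by (rule nn_integral_distr[symmetric]) measurable
  also have "\<dots> \<le> (\<integral>\<^sup>+y. 2 * g (x0, y) + ennreal (2 * (norm x0)^2) \<partial>?\<mu>)"
    by (intro nn_integral_mono pw)
  also have "\<dots> = 2 * (\<integral>\<^sup>+y. g (x0, y) \<partial>?\<mu>) + ennreal (2 * (norm x0)^2)"
    by (subst nn_integral_add) (auto simp: nn_integral_cmult sp1 g_def)
  also have "\<dots> < \<infinity>" using x0 by (simp add: ennreal_mult_less_top top.not_eq_extremum)
  finally show ?thesis .
qed

end

theorem proposition3p5:
  fixes M :: "'a measure" and f :: "real^2 \<Rightarrow> real"
    and \<xi> :: "int \<times> int \<Rightarrow> 'a \<Rightarrow> real^2" and x0 :: "real^2"
  assumes "prob_space M"
    and "schwartz2 f"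
    and "fourier2 f x0 \<noteq> 0"
    and "\<And>p. \<xi> p \<in> borel_measurable M"
    and "prob_space.indep_vars M (\<lambda>_. borel) \<xi> UNIV"
    and "\<And>p. distr M borel (\<xi> p) = distr M borel (\<xi> (0, 0))"
  shows "(\<exists>C::real. \<forall>r>0. evariance M (linstat f \<xi> r) \<le> ennreal C)
     \<longleftrightarrow> (\<integral>\<^sup>+ \<omega>. ennreal ((norm (\<xi> (0, 0) \<omega>))\<^sup>2) \<partial>M) < \<infinity>"
proof -
  interpret LS M f \<xi>
    by (rule LS.intro[OF assms(1)], rule LS_axioms.intro) (use assms in auto)
  obtain a0 where a0: "f a0 \<noteq> 0" using fourier_nz[OF assms(3)] by blast
  show ?thesis
  proof
    assume "\<exists>C::real. \<forall>r>0. evariance M (linstat f \<xi> r) \<le> ennreal C"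
    then obtain C :: real where C: "\<And>r. r > 0 \<Longrightarrow> evariance M (linstat f \<xi> r) \<le> ennreal C" by blast
    show "(\<integral>\<^sup>+ \<omega>. ennreal ((norm (\<xi> (0, 0) \<omega>))\<^sup>2) \<partial>M) < \<infinity>"
      by (rule moment_from_diff[OF lower_dir[OF a0 C]])
  next
    assume "(\<integral>\<^sup>+ \<omega>. ennreal ((norm (\<xi> (0, 0) \<omega>))\<^sup>2) \<partial>M) < \<infinity>"
    then show "\<exists>C::real. \<forall>r>0. evariance M (linstat f \<xi> r) \<le> ennreal C" by (rule upper_dir)
  qed
qed


end
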